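(* Let $L$ be a finite-dimensional nilpotent Lie superalgebra over $\mathbb{F}$ with $\dim L=(k\mid l)$ and $\dim L'=(r\mid s)$ where $r+s=1$. Then $L$ is capable if and only if either $L\cong H(1,0)\oplus A(k-3\mid l)$ or $L\cong H_{1}\oplus A(k-1\mid l-2)$.
   Context: All algebras are over a field $\mathbb{F}$ of characteristic $\neq 2,3$. A Lie superalgebra is $L=L_{\bar 0}\oplus L_{\bar 1}$ with a graded, graded skew-symmetric bracket satisfying the graded Jacobi identity; $\dim L=(m\mid n)$ means $\dim L_{\bar 0}=m$, $\dim L_{\bar 1}=n$. $L'=[L,L]$, $Z(L)$ is the center. A Lie superalgebra $L$ is capable if $L\cong H/Z(H)$ for some Lie superalgebra $H$. $A(m\mid n)$ denotes the abelian Lie superalgebra of dimension $(m\mid n)$. $H(m,n)$ ($m+n\ge 1$) is the Lie superalgebra with even basis $x_1,\dots,x_{2m},z$, odd basis $y_1,\dots,y_n$, and nonzero brackets $[x_i,x_{m+i}]=z$ ($1\le i\le m$), $[y_j,y_j]=z$ ($1\le j\le n$); it has dimension $(2m+1\mid n)$. $H_m$ ($m\ge1$) is the Lie superalgebra with even basis $x_1,\dots,x_m$, odd basis $y_1,\dots,y_m,z$, and nonzero brackets $[x_j,y_j]=z$ ($1\le j\le m$); it has dimension $(m\mid m+1)$. $\oplus$ denotes direct sum of Lie superalgebras. *)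

theory Defs
  imports Complex_Main "HOL-Library.Product_Plus" "HOL-Library.Function_Algebras"
begin

text \<open>A Lie superalgebra is given by an ambient vector space (type 'v with addition
and a scalar multiplication sm over the field 'f), a carrier subspace which is the
direct sum of the even part ev and the odd part od, and a bracket br.\<close>

record ('f, 'v) lsa =
  car :: "'v set"
  ev :: "'v set"
  od :: "'v set"
  sm :: "'f \<Rightarrow> 'v \<Rightarrow> 'v"
  br :: "'v \<Rightarrow> 'v \<Rightarrow> 'v"

definition part :: "('f, 'v) lsa \<Rightarrow> nat \<Rightarrow> 'v set" where
  "part L d = (if d = 0 then ev L else od L)"

definition sgnmul :: "nat \<Rightarrow> nat \<Rightarrow> 'v::ab_group_add \<Rightarrow> 'v" where
  "sgnmul i j v = (if odd (i * j) then - v else v)"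

definition is_lsa :: "('f::field, 'v::ab_group_add) lsa \<Rightarrow> bool" where
  "is_lsa L \<longleftrightarrow>
     vector_space (sm L) \<and>
     module.subspace (sm L) (ev L) \<and> module.subspace (sm L) (od L) \<and>
     ev L \<inter> od L = {0} \<and>
     car L = {a + b | a b. a \<in> ev L \<and> b \<in> od L} \<and>
     (\<forall>x\<in>car L. \<forall>y\<in>car L. br L x y \<in> car L) \<and>
     (\<forall>x\<in>car L. \<forall>y\<in>car L. \<forall>z\<in>car L.
        br L (x + y) z = br L x z + br L y z \<and> br L z (x + y) = br L z x + br L z y) \<and>
     (\<forall>c. \<forall>x\<in>car L. \<forall>y\<in>car L.
        br L (sm L c x) y = sm L c (br L x y) \<and> br L x (sm L c y) = sm L c (br L x y)) \<and>
     (\<forall>i<2. \<forall>j<2. \<forall>x\<in>part L i. \<forall>y\<in>part L j. br L x y \<in> part L ((i + j) mod 2)) \<and>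
     (\<forall>i<2. \<forall>j<2. \<forall>x\<in>part L i. \<forall>y\<in>part L j.
        br L x y = - sgnmul i j (br L y x)) \<and>
     (\<forall>i<2. \<forall>j<2. \<forall>k<2. \<forall>x\<in>part L i. \<forall>y\<in>part L j. \<forall>z\<in>part L k.
        br L x (br L y z) = br L (br L x y) z + sgnmul i j (br L y (br L x z)))"

definition fin_dim :: "('f::field, 'v::ab_group_add) lsa \<Rightarrow> bool" where
  "fin_dim L \<longleftrightarrow> (\<exists>B. finite B \<and> module.span (sm L) B = car L)"

text \<open>Dimensions of the even and odd parts of a subset S (for graded subspaces S).\<close>
definition dim_ev :: "('f::field, 'v::ab_group_add) lsa \<Rightarrow> 'v set \<Rightarrow> nat" where
  "dim_ev L S = vector_space.dim (sm L) (S \<inter> ev L)"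
definition dim_od :: "('f::field, 'v::ab_group_add) lsa \<Rightarrow> 'v set \<Rightarrow> nat" where
  "dim_od L S = vector_space.dim (sm L) (S \<inter> od L)"

definition brspan :: "('f::field, 'v::ab_group_add) lsa \<Rightarrow> 'v set \<Rightarrow> 'v set \<Rightarrow> 'v set" where
  "brspan L A B = module.span (sm L) {br L a b | a b. a \<in> A \<and> b \<in> B}"

definition derived :: "('f::field, 'v::ab_group_add) lsa \<Rightarrow> 'v set" where
  "derived L = brspan L (car L) (car L)"

fun lcs :: "('f::field, 'v::ab_group_add) lsa \<Rightarrow> nat \<Rightarrow> 'v set" where
  "lcs L 0 = car L"
| "lcs L (Suc n) = brspan L (lcs L n) (car L)"

definition nilpotent :: "('f::field, 'v::ab_group_add) lsa \<Rightarrow> bool" where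
  "nilpotent L \<longleftrightarrow> (\<exists>n. lcs L n = {0})"

definition center :: "('f, 'v::ab_group_add) lsa \<Rightarrow> 'v set" where
  "center L = {z \<in> car L. \<forall>x\<in>car L. br L z x = 0}"

definition lsa_hom :: "('f, 'v::ab_group_add) lsa \<Rightarrow> ('f, 'w::ab_group_add) lsa \<Rightarrow> ('v \<Rightarrow> 'w) \<Rightarrow> bool" where
  "lsa_hom L M f \<longleftrightarrow>
     (\<forall>x\<in>car L. f x \<in> car M) \<and>
     (\<forall>x\<in>car L. \<forall>y\<in>car L. f (x + y) = f x + f y) \<and>
     (\<forall>c. \<forall>x\<in>car L. f (sm L c x) = sm M c (f x)) \<and>
     f ` ev L \<subseteq> ev M \<and> f ` od L \<subseteq> od M \<and>
     (\<forall>x\<in>car L. \<forall>y\<in>car L. f (br L x y) = br M (f x) (f y))"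

definition lsa_iso :: "('f, 'v::ab_group_add) lsa \<Rightarrow> ('f, 'w::ab_group_add) lsa \<Rightarrow> ('v \<Rightarrow> 'w) \<Rightarrow> bool" where
  "lsa_iso L M f \<longleftrightarrow> lsa_hom L M f \<and> bij_betw f (car L) (car M)"

definition isomorphic :: "('f, 'v::ab_group_add) lsa \<Rightarrow> ('f, 'w::ab_group_add) lsa \<Rightarrow> bool" where
  "isomorphic L M \<longleftrightarrow> (\<exists>f. lsa_iso L M f)"

text \<open>H is a Lie superalgebra and f : H \<rightarrow> L is a surjective homomorphism with kernel Z(H),
  i.e. L \<cong> H/Z(H).\<close>
definition central_quot :: "('f::field, 'h::ab_group_add) lsa \<Rightarrow> ('f, 'v::ab_group_add) lsa \<Rightarrow> ('h \<Rightarrow> 'v) \<Rightarrow> bool" where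
  "central_quot H L f \<longleftrightarrow> is_lsa H \<and> lsa_hom H L f \<and> f ` car H = car L \<and>
      {x \<in> car H. f x = 0} = center H"

text \<open>L is capable, witnessed by some H whose ambient vector space is of type 'h.\<close>
definition capable_wrt :: "'h::ab_group_add itself \<Rightarrow> ('f::field, 'v::ab_group_add) lsa \<Rightarrow> bool" where
  "capable_wrt _ L \<longleftrightarrow> (\<exists>(H :: ('f, 'h) lsa) f. central_quot H L f)"

section \<open>Concrete Lie superalgebras, realised in nat \<Rightarrow> 'f (basis vector e_i = indicator of i)\<close>

definition fsm :: "'f::field \<Rightarrow> (nat \<Rightarrow> 'f) \<Rightarrow> nat \<Rightarrow> 'f" where
  "fsm c v = (\<lambda>j. c * v j)"

definition supp_in :: "nat \<Rightarrow> nat \<Rightarrow> (nat \<Rightarrow> 'f::zero) set" where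
  "supp_in a b = {v. \<forall>j. (j < a \<or> b \<le> j) \<longrightarrow> v j = 0}"

text \<open>H(m,n): x_i = e_(i-1) (1 \<le> i \<le> 2m), z = e_(2m), y_j = e_(2m+j) (1 \<le> j \<le> n);
  nonzero brackets [x_i, x_(m+i)] = z, [y_j, y_j] = z (extended bilinearly).\<close>
definition Heis :: "nat \<Rightarrow> nat \<Rightarrow> ('f::field, nat \<Rightarrow> 'f) lsa" where
  "Heis m n = \<lparr> car = supp_in 0 (2*m + n + 1),
                ev = supp_in 0 (2*m + 1),
                od = supp_in (2*m + 1) (2*m + n + 1),
                sm = fsm,
                br = (\<lambda>u v j. if j = 2*m then
                         (\<Sum>i<m. u i * v (m + i) - u (m + i) * v i)
                         + (\<Sum>k\<in>{1..n}. u (2*m + k) * v (2*m + k))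
                       else 0) \<rparr>"

text \<open>H_m: x_j = e_(j-1), y_j = e_(m+j-1) (1 \<le> j \<le> m), z = e_(2m);
  nonzero brackets [x_j, y_j] = z (and hence [y_j, x_j] = -z).\<close>
definition Hodd :: "nat \<Rightarrow> ('f::field, nat \<Rightarrow> 'f) lsa" where
  "Hodd m = \<lparr> car = supp_in 0 (2*m + 1),
              ev = supp_in 0 m,
              od = supp_in m (2*m + 1),
              sm = fsm,
              br = (\<lambda>u v j. if j = 2*m then
                       (\<Sum>i<m. u i * v (m + i) - u (m + i) * v i)
                     else 0) \<rparr>"

definition Aab :: "nat \<Rightarrow> nat \<Rightarrow> ('f::field, nat \<Rightarrow> 'f) lsa" where
  "Aab m n = \<lparr> car = supp_in 0 (m + n), ev = supp_in 0 m, od = supp_in m (m + n),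
               sm = fsm, br = (\<lambda>u v. 0) \<rparr>"

definition dsum :: "('f, 'v::ab_group_add) lsa \<Rightarrow> ('f, 'w::ab_group_add) lsa \<Rightarrow> ('f, 'v \<times> 'w) lsa" where
  "dsum L M = \<lparr> car = car L \<times> car M, ev = ev L \<times> ev M, od = od L \<times> od M,
                sm = (\<lambda>c (x, y). (sm L c x, sm M c y)),
                br = (\<lambda>(x1, y1) (x2, y2). (br L x1 x2, br M y1 y2)) \<rparr>"

end

theory Submission
  imports Defs
begin

definition gs :: "('f::field, 'v::ab_group_add) lsa \<Rightarrow> bool" where
  "gs L \<longleftrightarrow> 0 \<in> ev L \<and> 0 \<in> od L \<and> ev L \<inter> od L = {0} \<and>
     car L = {a + b | a b. a \<in> ev L \<and> b \<in> od L} \<and>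
     (\<forall>x\<in>ev L. \<forall>y\<in>ev L. x - y \<in> ev L) \<and> (\<forall>x\<in>od L. \<forall>y\<in>od L. x - y \<in> od L) \<and>
     (\<forall>x\<in>car L. \<forall>y\<in>car L. x + y \<in> car L \<and> br L x y \<in> car L) \<and>
     (\<forall>c. \<forall>x\<in>car L. sm L c x \<in> car L)"

lemma homD:
  assumes "lsa_hom L M f"
  shows hom_car: "x \<in> car L \<Longrightarrow> f x \<in> car M"
    and hom_add: "x \<in> car L \<Longrightarrow> y \<in> car L \<Longrightarrow> f (x + y) = f x + f y"
    and hom_sm: "x \<in> car L \<Longrightarrow> f (sm L c x) = sm M c (f x)"
    and hom_ev: "x \<in> ev L \<Longrightarrow> f x \<in> ev M"
    and hom_od: "x \<in> od L \<Longrightarrow> f x \<in> od M"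
    and hom_br: "x \<in> car L \<Longrightarrow> y \<in> car L \<Longrightarrow> f (br L x y) = br M (f x) (f y)"
  using assms unfolding lsa_hom_def image_subset_iff by simp_all

lemma gs_ev0: "gs L \<Longrightarrow> 0 \<in> ev L" by (simp add: gs_def)
lemma gs_od0: "gs L \<Longrightarrow> 0 \<in> od L" by (simp add: gs_def)
lemma gs_evod: "gs L \<Longrightarrow> ev L \<inter> od L = {0}" by (simp add: gs_def)
lemma gs_car: "gs L \<Longrightarrow> car L = {a + b | a b. a \<in> ev L \<and> b \<in> od L}" by (simp add: gs_def)
lemma gs_evdiff: "gs L \<Longrightarrow> x \<in> ev L \<Longrightarrow> y \<in> ev L \<Longrightarrow> x - y \<in> ev L" by (simp add: gs_def)
lemma gs_oddiff: "gs L \<Longrightarrow> x \<in> od L \<Longrightarrow> y \<in> od L \<Longrightarrow> x - y \<in> od L" by (simp add: gs_def)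
lemma gs_add: "gs L \<Longrightarrow> x \<in> car L \<Longrightarrow> y \<in> car L \<Longrightarrow> x + y \<in> car L" unfolding gs_def by metis
lemma gs_br: "gs L \<Longrightarrow> x \<in> car L \<Longrightarrow> y \<in> car L \<Longrightarrow> br L x y \<in> car L" unfolding gs_def by metis
lemma gs_sm: "gs L \<Longrightarrow> x \<in> car L \<Longrightarrow> sm L c x \<in> car L" unfolding gs_def by metis

lemma gs_ev_car: "gs L \<Longrightarrow> x \<in> ev L \<Longrightarrow> x \<in> car L"
proof -
  assume g: "gs L" and x: "x \<in> ev L"
  have "x + 0 \<in> {a + b | a b. a \<in> ev L \<and> b \<in> od L}" using x gs_od0[OF g] by blast
  thus ?thesis using gs_car[OF g] by simp
qed
lemma gs_od_car: "gs L \<Longrightarrow> x \<in> od L \<Longrightarrow> x \<in> car L"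
proof -
  assume g: "gs L" and x: "x \<in> od L"
  have "0 + x \<in> {a + b | a b. a \<in> ev L \<and> b \<in> od L}" using x gs_ev0[OF g] by blast
  thus ?thesis using gs_car[OF g] by simp
qed
lemma gs_zero_car: "gs L \<Longrightarrow> 0 \<in> car L"
  using gs_ev_car gs_ev0 by blast

lemma hom_zero:
  assumes "lsa_hom L M f" "gs L" shows "f 0 = 0"
proof -
  have "f (0 + 0) = f 0 + f 0" using assms gs_zero_car hom_add by blast
  thus ?thesis by simp
qed

lemma hom_comp:
  assumes "lsa_hom A B f" "lsa_hom B C g" shows "lsa_hom A C (g \<circ> f)"
  using assms unfolding lsa_hom_def by (auto simp: image_subset_iff)

lemma iso_inverse:
  assumes hom: "lsa_hom M L g" and bij: "bij_betw g (car M) (car L)" and gM: "gs M" and gL: "gs L"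
  shows "lsa_iso L M (inv_into (car M) g)"
proof -
  define h where "h = inv_into (car M) g"
  have inj: "inj_on g (car M)" using bij bij_betw_def by blast
  have hc: "h y \<in> car M" if "y \<in> car L" for y
    using bij that unfolding h_def by (metis bij_betw_def inv_into_into)
  have gh: "g (h y) = y" if "y \<in> car L" for y
    using bij that unfolding h_def by (meson bij_betw_inv_into_right)
  have gadd: "g (x + y) = g x + g y" if "x \<in> car M" "y \<in> car M" for x y
    using hom that by (rule hom_add)
  have g0: "g 0 = 0" using hom_zero[OF hom gM] .
  have h_add: "h (x + y) = h x + h y" if "x \<in> car L" "y \<in> car L" for x y
  proof -
    have "x + y \<in> car L" using gL that by (rule gs_add)
    moreover have "h x + h y \<in> car M" using gM hc that by (simp add: gs_add)
    moreover have "g (h x + h y) = x + y" using gadd hc gh that by simp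
    ultimately show ?thesis using inj hc gh by (metis inj_onD)
  qed
  have h_sm: "h (sm L c x) = sm M c (h x)" if "x \<in> car L" for x c
  proof -
    have "sm L c x \<in> car L" using gL that by (rule gs_sm)
    moreover have "sm M c (h x) \<in> car M" using gM hc that by (simp add: gs_sm)
    moreover have "g (sm M c (h x)) = sm L c x" using hom_sm[OF hom] hc gh that by metis
    ultimately show ?thesis using inj hc gh by (metis inj_onD)
  qed
  have h_br: "h (br L x y) = br M (h x) (h y)" if "x \<in> car L" "y \<in> car L" for x y
  proof -
    have "br L x y \<in> car L" using gL that by (rule gs_br)
    moreover have "br M (h x) (h y) \<in> car M" using gM hc that by (simp add: gs_br)
    moreover have "g (br M (h x) (h y)) = br L x y" using hom_br[OF hom] hc gh that by metis
    ultimately show ?thesis using inj hc gh by (metis inj_onD)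
  qed
  have dec: "\<exists>a b. a \<in> ev M \<and> b \<in> od M \<and> m = a + b" if "m \<in> car M" for m
    using gs_car[OF gM] that by blast
  have h_ev: "h x \<in> ev M" if x: "x \<in> ev L" for x
  proof -
    have xc: "x \<in> car L" using gs_ev_car[OF gL x] .
    obtain a b where ab: "a \<in> ev M" "b \<in> od M" "h x = a + b" using dec hc[OF xc] by blast
    have ac: "a \<in> car M" "b \<in> car M" using ab gs_ev_car gs_od_car gM by blast+
    have "x = g a + g b" using gh[OF xc] ab gadd ac by metis
    moreover have "g a \<in> ev L" "g b \<in> od L" using hom_ev[OF hom] hom_od[OF hom] ab by blast+
    ultimately have "g b = x - g a" "g b \<in> od L" by auto
    hence "g b \<in> ev L" using gs_evdiff[OF gL] x \<open>g a \<in> ev L\<close> by metis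
    hence "g b = 0" using \<open>g b \<in> od L\<close> gs_evod[OF gL] by blast
    hence "b = 0" using inj ac g0 gs_zero_car[OF gM] by (metis inj_onD)
    thus ?thesis using ab by simp
  qed
  have h_od: "h x \<in> od M" if x: "x \<in> od L" for x
  proof -
    have xc: "x \<in> car L" using gs_od_car[OF gL x] .
    obtain a b where ab: "a \<in> ev M" "b \<in> od M" "h x = a + b" using dec hc[OF xc] by blast
    have ac: "a \<in> car M" "b \<in> car M" using ab gs_ev_car gs_od_car gM by blast+
    have "x = g a + g b" using gh[OF xc] ab gadd ac by metis
    moreover have "g a \<in> ev L" "g b \<in> od L" using hom_ev[OF hom] hom_od[OF hom] ab by blast+
    ultimately have "g a = x - g b" "g a \<in> ev L" by (auto simp: algebra_simps)
    hence "g a \<in> od L" using gs_oddiff[OF gL] x \<open>g b \<in> od L\<close> by metis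
    hence "g a = 0" using \<open>g a \<in> ev L\<close> gs_evod[OF gL] by blast
    hence "a = 0" using inj ac g0 gs_zero_car[OF gM] by (metis inj_onD)
    thus ?thesis using ab by simp
  qed
  have "lsa_hom L M h" unfolding lsa_hom_def using hc h_add h_sm h_ev h_od h_br by (simp add: image_subset_iff)
  moreover have "bij_betw h (car L) (car M)" unfolding h_def using bij by (rule bij_betw_inv_into)
  ultimately show ?thesis unfolding lsa_iso_def h_def[symmetric] by blast
qed

lemma lsa_vs: "is_lsa L \<Longrightarrow> vector_space (sm L)"
  unfolding is_lsa_def by ((elim conjE), assumption)
lemma lsa_sub_ev: "is_lsa L \<Longrightarrow> module.subspace (sm L) (ev L)"
  unfolding is_lsa_def by ((elim conjE), assumption)
lemma lsa_sub_od: "is_lsa L \<Longrightarrow> module.subspace (sm L) (od L)"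
  unfolding is_lsa_def by ((elim conjE), assumption)
lemma lsa_evod: "is_lsa L \<Longrightarrow> ev L \<inter> od L = {0}"
  unfolding is_lsa_def by ((elim conjE), assumption)
lemma lsa_car: "is_lsa L \<Longrightarrow> car L = {a + b | a b. a \<in> ev L \<and> b \<in> od L}"
  unfolding is_lsa_def by ((elim conjE), assumption)
lemma lsa_brc0: "is_lsa L \<Longrightarrow> (\<forall>x\<in>car L. \<forall>y\<in>car L. br L x y \<in> car L)"
  unfolding is_lsa_def by ((elim conjE), assumption)
lemma lsa_add0: "is_lsa L \<Longrightarrow> (\<forall>x\<in>car L. \<forall>y\<in>car L. \<forall>z\<in>car L.
        br L (x + y) z = br L x z + br L y z \<and> br L z (x + y) = br L z x + br L z y)"
  unfolding is_lsa_def by ((elim conjE), assumption)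
lemma lsa_sm0: "is_lsa L \<Longrightarrow> (\<forall>c. \<forall>x\<in>car L. \<forall>y\<in>car L.
        br L (sm L c x) y = sm L c (br L x y) \<and> br L x (sm L c y) = sm L c (br L x y))"
  unfolding is_lsa_def by ((elim conjE), assumption)
lemma lsa_grade0: "is_lsa L \<Longrightarrow> (\<forall>i<2. \<forall>j<2. \<forall>x\<in>part L i. \<forall>y\<in>part L j. br L x y \<in> part L ((i + j) mod 2))"
  unfolding is_lsa_def by ((elim conjE), assumption)
lemma lsa_skew0: "is_lsa L \<Longrightarrow> (\<forall>i<2. \<forall>j<2. \<forall>x\<in>part L i. \<forall>y\<in>part L j.
        br L x y = - sgnmul i j (br L y x))"
  unfolding is_lsa_def by ((elim conjE), assumption)
lemma lsa_jac0: "is_lsa L \<Longrightarrow> (\<forall>i<2. \<forall>j<2. \<forall>k<2. \<forall>x\<in>part L i. \<forall>y\<in>part L j. \<forall>z\<in>part L k.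
        br L x (br L y z) = br L (br L x y) z + sgnmul i j (br L y (br L x z)))"
  unfolding is_lsa_def by ((elim conjE), assumption)

lemma is_lsaD:
  assumes "is_lsa L"
  shows lsa_brc: "x \<in> car L \<Longrightarrow> y \<in> car L \<Longrightarrow> br L x y \<in> car L"
    and lsa_addl: "x \<in> car L \<Longrightarrow> y \<in> car L \<Longrightarrow> z \<in> car L \<Longrightarrow> br L (x + y) z = br L x z + br L y z"
    and lsa_addr: "x \<in> car L \<Longrightarrow> y \<in> car L \<Longrightarrow> z \<in> car L \<Longrightarrow> br L z (x + y) = br L z x + br L z y"
    and lsa_sml: "x \<in> car L \<Longrightarrow> y \<in> car L \<Longrightarrow> br L (sm L c x) y = sm L c (br L x y)"
    and lsa_smr: "x \<in> car L \<Longrightarrow> y \<in> car L \<Longrightarrow> br L x (sm L c y) = sm L c (br L x y)"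
    and lsa_grade: "i < 2 \<Longrightarrow> j < 2 \<Longrightarrow> x \<in> part L i \<Longrightarrow> y \<in> part L j \<Longrightarrow> br L x y \<in> part L ((i + j) mod 2)"
    and lsa_skew: "i < 2 \<Longrightarrow> j < 2 \<Longrightarrow> x \<in> part L i \<Longrightarrow> y \<in> part L j \<Longrightarrow> br L x y = - sgnmul i j (br L y x)"
    and lsa_jac: "i < 2 \<Longrightarrow> j < 2 \<Longrightarrow> k < 2 \<Longrightarrow> x \<in> part L i \<Longrightarrow> y \<in> part L j \<Longrightarrow> z \<in> part L k \<Longrightarrow>
        br L x (br L y z) = br L (br L x y) z + sgnmul i j (br L y (br L x z))"
proof -
  note A = lsa_vs[OF assms] lsa_sub_ev[OF assms] lsa_sub_od[OF assms] lsa_evod[OF assms] lsa_car[OF assms] lsa_brc0[OF assms] lsa_add0[OF assms] lsa_sm0[OF assms] lsa_grade0[OF assms] lsa_skew0[OF assms] lsa_jac0[OF assms]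
  show "x \<in> car L \<Longrightarrow> y \<in> car L \<Longrightarrow> br L x y \<in> car L" using A(6) by blast
  show "x \<in> car L \<Longrightarrow> y \<in> car L \<Longrightarrow> z \<in> car L \<Longrightarrow> br L (x + y) z = br L x z + br L y z" using A(7) by blast
  show "x \<in> car L \<Longrightarrow> y \<in> car L \<Longrightarrow> z \<in> car L \<Longrightarrow> br L z (x + y) = br L z x + br L z y" using A(7) by blast
  show "x \<in> car L \<Longrightarrow> y \<in> car L \<Longrightarrow> br L (sm L c x) y = sm L c (br L x y)" using A(8) by blast
  show "x \<in> car L \<Longrightarrow> y \<in> car L \<Longrightarrow> br L x (sm L c y) = sm L c (br L x y)" using A(8) by blast
  show "i < 2 \<Longrightarrow> j < 2 \<Longrightarrow> x \<in> part L i \<Longrightarrow> y \<in> part L j \<Longrightarrow> br L x y \<in> part L ((i + j) mod 2)" using A(9) by blast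
  show "i < 2 \<Longrightarrow> j < 2 \<Longrightarrow> x \<in> part L i \<Longrightarrow> y \<in> part L j \<Longrightarrow> br L x y = - sgnmul i j (br L y x)" using A(10) by blast
  show "i < 2 \<Longrightarrow> j < 2 \<Longrightarrow> k < 2 \<Longrightarrow> x \<in> part L i \<Longrightarrow> y \<in> part L j \<Longrightarrow> z \<in> part L k \<Longrightarrow>
        br L x (br L y z) = br L (br L x y) z + sgnmul i j (br L y (br L x z))" using A(11) by blast
qed

locale lsa_ctx =
  fixes L :: "('f::field, 'v::ab_group_add) lsa"
  assumes lsa: "is_lsa L"
begin

sublocale V: vector_space "sm L" by (rule lsa_vs[OF lsa])

lemma ev_sub: "V.subspace (ev L)" using lsa_sub_ev[OF lsa] .
lemma od_sub: "V.subspace (od L)" using lsa_sub_od[OF lsa] .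
lemma evod: "ev L \<inter> od L = {0}" using lsa_evod[OF lsa] .
lemma carD: "car L = {a + b | a b. a \<in> ev L \<and> b \<in> od L}" using lsa_car[OF lsa] .

lemma ev0: "0 \<in> ev L" using V.subspace_0[OF ev_sub] .
lemma od0: "0 \<in> od L" using V.subspace_0[OF od_sub] .

lemma ev_car: "x \<in> ev L \<Longrightarrow> x \<in> car L"
proof -
  assume x: "x \<in> ev L"
  have "x + 0 \<in> {a + b | a b. a \<in> ev L \<and> b \<in> od L}" using x od0 by blast
  thus ?thesis using carD by simp
qed
lemma od_car: "x \<in> od L \<Longrightarrow> x \<in> car L"
proof -
  assume x: "x \<in> od L"
  have "0 + x \<in> {a + b | a b. a \<in> ev L \<and> b \<in> od L}" using x ev0 by blast
  thus ?thesis using carD by simp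
qed

lemma decomp: "x \<in> car L \<Longrightarrow> \<exists>a b. a \<in> ev L \<and> b \<in> od L \<and> x = a + b"
  using carD by blast

lemma evod_zero: "a \<in> ev L \<Longrightarrow> b \<in> od L \<Longrightarrow> a + b = 0 \<Longrightarrow> a = 0 \<and> b = 0"
proof -
  assume a: "a \<in> ev L" and b: "b \<in> od L" and s: "a + b = 0"
  have "a = - b" using s by (simp add: add_eq_0_iff)
  hence "a \<in> od L" using V.subspace_neg[OF od_sub b] by simp
  hence "a = 0" using a evod by blast
  thus ?thesis using s by simp
qed

lemma car_sub: "V.subspace (car L)"
  unfolding V.subspace_def
proof (intro conjI ballI allI)
  show "0 \<in> car L" using ev_car ev0 by blast
next
  fix x y assume x: "x \<in> car L" and y: "y \<in> car L"
  obtain a b where ab: "a \<in> ev L" "b \<in> od L" "x = a + b" using decomp[OF x] by blast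
  obtain c d where cd: "c \<in> ev L" "d \<in> od L" "y = c + d" using decomp[OF y] by blast
  have "x + y = (a + c) + (b + d)" using ab cd by (simp add: algebra_simps)
  moreover have "a + c \<in> ev L" using V.subspace_add[OF ev_sub] ab cd by blast
  moreover have "b + d \<in> od L" using V.subspace_add[OF od_sub] ab cd by blast
  ultimately show "x + y \<in> car L" using carD by blast
next
  fix c x assume x: "x \<in> car L"
  obtain a b where ab: "a \<in> ev L" "b \<in> od L" "x = a + b" using decomp[OF x] by blast
  have "sm L c x = sm L c a + sm L c b" using ab by (simp add: V.scale_right_distrib)
  moreover have "sm L c a \<in> ev L" using V.subspace_scale[OF ev_sub] ab by blast
  moreover have "sm L c b \<in> od L" using V.subspace_scale[OF od_sub] ab by blast
  ultimately show "sm L c x \<in> car L" using carD by blast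
qed

lemma car0: "0 \<in> car L" using V.subspace_0[OF car_sub] .
lemma car_add: "x \<in> car L \<Longrightarrow> y \<in> car L \<Longrightarrow> x + y \<in> car L" using V.subspace_add[OF car_sub] .
lemma car_diff: "x \<in> car L \<Longrightarrow> y \<in> car L \<Longrightarrow> x - y \<in> car L" using V.subspace_diff[OF car_sub] .
lemma car_neg: "x \<in> car L \<Longrightarrow> - x \<in> car L" using V.subspace_neg[OF car_sub] .
lemma car_sm: "x \<in> car L \<Longrightarrow> sm L c x \<in> car L" using V.subspace_scale[OF car_sub] .
lemma car_sum: "(\<And>i. i \<in> A \<Longrightarrow> f i \<in> car L) \<Longrightarrow> sum f A \<in> car L" using V.subspace_sum[OF car_sub] .
lemma span_car: "S \<subseteq> car L \<Longrightarrow> V.span S \<subseteq> car L" using V.span_minimal[OF _ car_sub] .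

lemma gs: "gs L"
  unfolding gs_def using ev0 od0 evod carD V.subspace_diff[OF ev_sub] V.subspace_diff[OF od_sub]
    car_add lsa_brc[OF lsa] car_sm by simp

lemma brc: "x \<in> car L \<Longrightarrow> y \<in> car L \<Longrightarrow> br L x y \<in> car L" using lsa_brc[OF lsa] .
lemma br_addl: "x \<in> car L \<Longrightarrow> y \<in> car L \<Longrightarrow> z \<in> car L \<Longrightarrow> br L (x + y) z = br L x z + br L y z"
  using lsa_addl[OF lsa] .
lemma br_addr: "x \<in> car L \<Longrightarrow> y \<in> car L \<Longrightarrow> z \<in> car L \<Longrightarrow> br L z (x + y) = br L z x + br L z y"
  using lsa_addr[OF lsa] .
lemma br_sml: "x \<in> car L \<Longrightarrow> y \<in> car L \<Longrightarrow> br L (sm L c x) y = sm L c (br L x y)"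
  using lsa_sml[OF lsa] .
lemma br_smr: "x \<in> car L \<Longrightarrow> y \<in> car L \<Longrightarrow> br L x (sm L c y) = sm L c (br L x y)"
  using lsa_smr[OF lsa] .

lemma br_0l: "y \<in> car L \<Longrightarrow> br L 0 y = 0"
  using br_sml[OF car0, of y 0] by simp
lemma br_0r: "x \<in> car L \<Longrightarrow> br L x 0 = 0"
  using br_smr[OF _ car0, of x 0] by simp
lemma br_negl: "x \<in> car L \<Longrightarrow> y \<in> car L \<Longrightarrow> br L (- x) y = - br L x y"
  using br_sml[of x y "-1"] by (simp add: V.scale_minus_left)
lemma br_negr: "x \<in> car L \<Longrightarrow> y \<in> car L \<Longrightarrow> br L x (- y) = - br L x y"
  using br_smr[of x y "-1"] by (simp add: V.scale_minus_left)
lemma br_diffl: "x \<in> car L \<Longrightarrow> y \<in> car L \<Longrightarrow> z \<in> car L \<Longrightarrow> br L (x - y) z = br L x z - br L y z"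
  using br_addl[of x "- y" z] br_negl car_neg by simp
lemma br_diffr: "x \<in> car L \<Longrightarrow> y \<in> car L \<Longrightarrow> z \<in> car L \<Longrightarrow> br L z (x - y) = br L z x - br L z y"
  using br_addr[of x "- y" z] br_negr car_neg by simp

lemma br_suml: "finite A \<Longrightarrow> (\<And>i. i \<in> A \<Longrightarrow> f i \<in> car L) \<Longrightarrow> y \<in> car L \<Longrightarrow>
   br L (sum f A) y = (\<Sum>i\<in>A. br L (f i) y)"
proof (induction A rule: finite_induct)
  case empty thus ?case by (simp add: br_0l)
next
  case (insert a A)
  have "sum f A \<in> car L" using insert car_sum by blast
  thus ?case using insert br_addl by simp
qed
lemma br_sumr: "finite A \<Longrightarrow> (\<And>i. i \<in> A \<Longrightarrow> f i \<in> car L) \<Longrightarrow> y \<in> car L \<Longrightarrow>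
   br L y (sum f A) = (\<Sum>i\<in>A. br L y (f i))"
proof (induction A rule: finite_induct)
  case empty thus ?case by (simp add: br_0r)
next
  case (insert a A)
  have "sum f A \<in> car L" using insert car_sum by blast
  thus ?case using insert br_addr by simp
qed

lemma part0: "part L 0 = ev L" by (simp add: part_def)
lemma part1: "part L (Suc 0) = od L" by (simp add: part_def)
lemma part_car: "i < 2 \<Longrightarrow> x \<in> part L i \<Longrightarrow> x \<in> car L"
  by (cases i) (auto simp: part_def ev_car od_car)

lemma ee: "x \<in> ev L \<Longrightarrow> y \<in> ev L \<Longrightarrow> br L x y \<in> ev L"
  using lsa_grade[OF lsa, of 0 0 x y] by (simp add: part_def)
lemma eo: "x \<in> ev L \<Longrightarrow> y \<in> od L \<Longrightarrow> br L x y \<in> od L"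
  using lsa_grade[OF lsa, of 0 1 x y] by (simp add: part_def)
lemma oe: "x \<in> od L \<Longrightarrow> y \<in> ev L \<Longrightarrow> br L x y \<in> od L"
  using lsa_grade[OF lsa, of 1 0 x y] by (simp add: part_def)
lemma oo: "x \<in> od L \<Longrightarrow> y \<in> od L \<Longrightarrow> br L x y \<in> ev L"
  using lsa_grade[OF lsa, of 1 1 x y] by (simp add: part_def)

lemma skew_e: "x \<in> ev L \<Longrightarrow> y \<in> car L \<Longrightarrow> br L x y = - br L y x"
proof -
  assume x: "x \<in> ev L" and y: "y \<in> car L"
  obtain a b where ab: "a \<in> ev L" "b \<in> od L" "y = a + b" using decomp[OF y] by blast
  have 1: "br L x a = - br L a x" using lsa_skew[OF lsa, of 0 0 x a] x ab by (simp add: part_def sgnmul_def)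
  have 2: "br L x b = - br L b x" using lsa_skew[OF lsa, of 0 1 x b] x ab by (simp add: part_def sgnmul_def)
  show ?thesis using 1 2 ab x br_addl br_addr ev_car od_car by simp
qed
lemma skew_e': "x \<in> car L \<Longrightarrow> y \<in> ev L \<Longrightarrow> br L x y = - br L y x"
  using skew_e by (metis minus_minus)
lemma skew_oo: "x \<in> od L \<Longrightarrow> y \<in> od L \<Longrightarrow> br L x y = br L y x"
  using lsa_skew[OF lsa, of 1 1 x y] by (simp add: part_def sgnmul_def)

lemma jac_e: "x \<in> ev L \<Longrightarrow> y \<in> part L j \<Longrightarrow> z \<in> part L k \<Longrightarrow> j < 2 \<Longrightarrow> k < 2 \<Longrightarrow>
   br L x (br L y z) = br L (br L x y) z + br L y (br L x z)"
  using lsa_jac[OF lsa, of 0 j k x y z] by (simp add: part_def sgnmul_def)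
lemma jac_oe: "x \<in> od L \<Longrightarrow> y \<in> ev L \<Longrightarrow> z \<in> part L k \<Longrightarrow> k < 2 \<Longrightarrow>
   br L x (br L y z) = br L (br L x y) z + br L y (br L x z)"
  using lsa_jac[OF lsa, of 1 0 k x y z] by (simp add: part_def sgnmul_def)
lemma jac_oo: "x \<in> od L \<Longrightarrow> y \<in> od L \<Longrightarrow> z \<in> part L k \<Longrightarrow> k < 2 \<Longrightarrow>
   br L x (br L y z) = br L (br L x y) z - br L y (br L x z)"
  using lsa_jac[OF lsa, of 1 1 k x y z] by (simp add: part_def sgnmul_def)

definition center_set where "center_set = center L"

lemma center_graded:
  assumes c: "c \<in> center L"
  shows "\<exists>a b. a \<in> ev L \<and> b \<in> od L \<and> c = a + b \<and> a \<in> center L \<and> b \<in> center L"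
proof -
  have cc: "c \<in> car L" using c unfolding center_def by blast
  obtain a b where ab: "a \<in> ev L" "b \<in> od L" "c = a + b" using decomp[OF cc] by blast
  have hom: "br L a y = 0 \<and> br L b y = 0" if y: "y \<in> car L" for y
  proof -
    obtain p q where pq: "p \<in> ev L" "q \<in> od L" "y = p + q" using decomp[OF y] by blast
    have "br L c p = 0" "br L c q = 0" using c pq ev_car od_car unfolding center_def by auto
    hence 1: "br L a p + br L b p = 0" "br L a q + br L b q = 0"
      using ab pq br_addl ev_car od_car by auto
    have "br L a p \<in> ev L" "br L b p \<in> od L" using ee oe ab pq by auto
    hence a1: "br L a p = 0 \<and> br L b p = 0" using evod_zero 1 by blast
    have "br L b q \<in> ev L" "br L a q \<in> od L" using oo eo ab pq by auto
    hence a2: "br L a q = 0 \<and> br L b q = 0" using evod_zero 1 by (metis add.commute)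
    show ?thesis using a1 a2 pq br_addr ev_car od_car ab by simp
  qed
  show ?thesis using ab hom ev_car od_car unfolding center_def by blast
qed

lemma center_right:
  assumes c: "c \<in> center L" and y: "y \<in> car L" shows "br L y c = 0"
proof -
  obtain a b where ab: "a \<in> ev L" "b \<in> od L" "c = a + b" "a \<in> center L" "b \<in> center L"
    using center_graded[OF c] by blast
  have 1: "br L y a = 0" using skew_e'[OF y ab(1)] ab(4) y unfolding center_def by simp
  obtain p q where pq: "p \<in> ev L" "q \<in> od L" "y = p + q" using decomp[OF y] by blast
  have "br L p b = 0" using skew_e[OF pq(1)] ab od_car ev_car[OF pq(1)] unfolding center_def by auto
  moreover have "br L q b = 0" using skew_oo[OF pq(2) ab(2)] ab od_car[OF pq(2)] unfolding center_def by auto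
  ultimately have 2: "br L y b = 0" using pq br_addl ev_car od_car ab by simp
  show ?thesis using 1 2 ab y br_addr ev_car od_car by simp
qed

lemma centerI: "c \<in> car L \<Longrightarrow> (\<And>y. y \<in> ev L \<Longrightarrow> br L c y = 0) \<Longrightarrow> (\<And>y. y \<in> od L \<Longrightarrow> br L c y = 0)
   \<Longrightarrow> c \<in> center L"
  unfolding center_def
proof (intro CollectI conjI ballI)
  fix y assume c: "c \<in> car L" and e: "\<And>y. y \<in> ev L \<Longrightarrow> br L c y = 0" and o: "\<And>y. y \<in> od L \<Longrightarrow> br L c y = 0"
    and y: "y \<in> car L"
  obtain p q where pq: "p \<in> ev L" "q \<in> od L" "y = p + q" using decomp[OF y] by blast
  show "br L c y = 0" using pq e o br_addr c ev_car od_car by simp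
qed (simp)

lemma center_sub: "V.subspace (center L)"
  unfolding V.subspace_def
proof (intro conjI ballI allI)
  show "0 \<in> center L" unfolding center_def using car0 br_0l by blast
next
  fix x y assume "x \<in> center L" "y \<in> center L"
  thus "x + y \<in> center L" unfolding center_def using car_add br_addl by auto
next
  fix c x assume "x \<in> center L"
  thus "sm L c x \<in> center L" unfolding center_def using car_sm br_sml by auto
qed

end

lemma sgnmul0[simp]: "sgnmul i j (0::'a::ab_group_add) = 0" by (simp add: sgnmul_def)

context lsa_ctx begin

lemma jac_center:
  assumes "i < 2" "j < 2" "k < 2" "x \<in> part L i" "y \<in> part L j" "w \<in> part L k"
    "br L x y \<in> center L" "br L x w \<in> center L"
  shows "br L x (br L y w) = 0"
proof -
  have "br L x (br L y w) = br L (br L x y) w + sgnmul i j (br L y (br L x w))"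
    using lsa_jac[OF lsa] assms by blast
  moreover have "br L (br L x y) w = 0" using assms part_car unfolding center_def by blast
  moreover have "br L y (br L x w) = 0" using assms part_car center_right by blast
  ultimately show ?thesis by simp
qed

lemma three_zero:
  fixes x :: 'v
  assumes c3: "(3::'f) \<noteq> 0" and "x + x + x = 0" shows "x = 0"
proof -
  have "sm L 3 x = sm L (1 + 1 + 1) x" by simp
  also have "\<dots> = x + x + x" by (simp only: V.scale_left_distrib V.scale_one)
  finally have "sm L 3 x = 0" using assms by simp
  thus ?thesis using c3 by simp
qed

lemma two_zero:
  fixes x :: 'v
  assumes c2: "(2::'f) \<noteq> 0" and "x + x = 0" shows "x = 0"
proof -
  have "sm L 2 x = sm L (1 + 1) x" by simp
  also have "\<dots> = x + x" by (simp only: V.scale_left_distrib V.scale_one)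
  finally have "sm L 2 x = 0" using assms by simp
  thus ?thesis using c2 by simp
qed

lemma part_cases: "i < 2 \<Longrightarrow> x \<in> part L i \<Longrightarrow> (i = 0 \<and> x \<in> ev L) \<or> (i = 1 \<and> x \<in> od L)"
  by (cases i) (auto simp: part_def)

lemma central_from_homog:
  assumes zc: "z \<in> part L p" "p < 2" and h: "\<And>q h. q < 2 \<Longrightarrow> h \<in> part L q \<Longrightarrow> br L h z = 0"
  shows "z \<in> center L"
proof (rule centerI)
  show "z \<in> car L" using zc part_car by blast
next
  fix y assume y: "y \<in> ev L"
  have "br L z y = - sgnmul p 0 (br L y z)" using lsa_skew[OF lsa, of p 0 z y] zc y by (simp add: part_def)
  thus "br L z y = 0" using h[of 0 y] y by (simp add: part_def)
next
  fix y assume y: "y \<in> od L"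
  have "br L z y = - sgnmul p 1 (br L y z)" using lsa_skew[OF lsa, of p 1 z y] zc y by (simp add: part_def)
  thus "br L z y = 0" using h[of 1 y] y by (simp add: part_def)
qed

end

locale cq_ctx = H: lsa_ctx H + L: lsa_ctx L
  for H :: "('f::field, 'h::ab_group_add) lsa" and L :: "('f, 'v::ab_group_add) lsa" +
  fixes f
  assumes hom: "lsa_hom H L f" and surj: "f ` car H = car L" and ker: "{x \<in> car H. f x = 0} = center H"
begin

lemma f0: "f 0 = 0" using hom_zero[OF hom H.gs] .
lemma fsm: "x \<in> car H \<Longrightarrow> f (sm H c x) = sm L c (f x)" using hom_sm[OF hom] .
lemma fadd: "x \<in> car H \<Longrightarrow> y \<in> car H \<Longrightarrow> f (x + y) = f x + f y" using hom_add[OF hom] .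
lemma fdiff: "x \<in> car H \<Longrightarrow> y \<in> car H \<Longrightarrow> f (x - y) = f x - f y"
  using fadd[of "x - y" y] H.car_diff by (simp add: algebra_simps)
lemma fbr: "x \<in> car H \<Longrightarrow> y \<in> car H \<Longrightarrow> f (br H x y) = br L (f x) (f y)" using hom_br[OF hom] .
lemma fcar: "x \<in> car H \<Longrightarrow> f x \<in> car L" using hom_car[OF hom] .
lemma kerc: "x \<in> car H \<Longrightarrow> f x = 0 \<Longrightarrow> x \<in> center H" using ker by blast
lemma cker: "x \<in> center H \<Longrightarrow> f x = 0" using ker by blast

lemma lift_part:
  assumes i: "i < 2" and x: "x \<in> part L i" shows "\<exists>y \<in> part H i. f y = x"
proof -
  have xc: "x \<in> car L" using L.part_car[OF i x] .
  then obtain y where y: "y \<in> car H" "f y = x" using surj by (metis imageE)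
  obtain a b where ab: "a \<in> ev H" "b \<in> od H" "y = a + b" using H.decomp[OF y(1)] by blast
  have "f y = f a + f b" using fadd[of a b] ab H.ev_car H.od_car by simp
  hence fab: "f a + f b = x" using y by simp
  have fe: "f a \<in> ev L" "f b \<in> od L" using hom_ev[OF hom] hom_od[OF hom] ab by blast+
  show ?thesis
  proof (cases "i = 0")
    case True
    hence xe: "x \<in> ev L" using x by (simp add: part_def)
    have "f b = x - f a" using fab by (simp add: algebra_simps)
    hence "f b \<in> ev L" using L.V.subspace_diff[OF L.ev_sub xe fe(1)] by simp
    hence "f b = 0" using fe L.evod by blast
    thus ?thesis using ab fab True by (auto simp: part_def)
  next
    case False
    hence xe: "x \<in> od L" "i = 1" using x i by (auto simp: part_def)
    have "f a = x - f b" using fab by (simp add: algebra_simps)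
    hence "f a \<in> od L" using L.V.subspace_diff[OF L.od_sub xe(1) fe(2)] by simp
    hence "f a = 0" using fe L.evod by blast
    thus ?thesis using ab fab xe by (auto simp: part_def)
  qed
qed

lemma core:
  assumes i: "i < 2" "j < 2" and a: "a \<in> part H i" and b: "b \<in> part H j"
    and nz: "f (br H a b) \<noteq> 0"
    and sp: "\<forall>x\<in>car L. \<forall>y\<in>car L. br L x y \<in> L.V.span {f (br H a b)}"
    and az: "br H a (br H a b) = 0" and bz: "br H b (br H a b) = 0"
  shows False
proof -
  define zh where "zh = br H a b"
  have ac: "a \<in> car H" "b \<in> car H" using H.part_car i a b by blast+
  have zp: "zh \<in> part H ((i + j) mod 2)" unfolding zh_def using lsa_grade[OF H.lsa] i a b by blast
  have zc: "zh \<in> car H" unfolding zh_def using H.brc ac by blast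
  have K: "\<exists>t. br H h u - sm H t zh \<in> center H" if h: "h \<in> car H" "u \<in> car H" for h u
  proof -
    have "f (br H h u) \<in> L.V.span {f zh}" using sp fbr fcar h unfolding zh_def by metis
    then obtain t where t: "f (br H h u) = sm L t (f zh)" using L.V.span_singleton by blast
    have "f (br H h u - sm H t zh) = 0" using t fdiff fsm H.brc H.car_sm zc h by simp
    moreover have "br H h u - sm H t zh \<in> car H" using H.brc H.car_sm H.car_diff zc h by blast
    ultimately show ?thesis using kerc by blast
  qed
  have zb: "br H zh b = 0"
  proof -
    have "br H zh b = - sgnmul ((i + j) mod 2) j (br H b zh)"
      using lsa_skew[OF H.lsa, of "(i + j) mod 2" j zh b] zp b i by simp
    thus ?thesis using bz unfolding zh_def by simp
  qed
  have hz: "br H h zh = 0" if q: "q < 2" "h \<in> part H q" for q h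
  proof -
    have hc: "h \<in> car H" using H.part_car q by blast
    have J: "br H h zh = br H (br H h a) b + sgnmul q i (br H a (br H h b))"
      unfolding zh_def using lsa_jac[OF H.lsa, of q i j h a b] q i a b by blast
    obtain t where t: "br H h a - sm H t zh \<in> center H" using K hc ac by blast
    define c1 where "c1 = br H h a - sm H t zh"
    have c1c: "c1 \<in> car H" using t c1_def unfolding center_def by blast
    have e1: "br H h a = sm H t zh + c1" unfolding c1_def by simp
    have "br H (br H h a) b = sm H t (br H zh b) + br H c1 b"
      unfolding e1 using H.br_addl H.br_sml H.car_sm zc c1c ac by simp
    also have "\<dots> = 0" using zb t c1_def ac unfolding center_def by simp
    finally have 1: "br H (br H h a) b = 0" .
    obtain t' where t': "br H h b - sm H t' zh \<in> center H" using K hc ac by blast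
    define c2 where "c2 = br H h b - sm H t' zh"
    have c2c: "c2 \<in> car H" using t' c2_def unfolding center_def by blast
    have e2: "br H h b = sm H t' zh + c2" unfolding c2_def by simp
    have "br H a (br H h b) = sm H t' (br H a zh) + br H a c2"
      unfolding e2 using H.br_addr H.br_smr H.car_sm zc c2c ac by simp
    also have "\<dots> = 0" using az H.center_right[of c2 a] t' c2_def ac unfolding zh_def by simp
    finally have 2: "br H a (br H h b) = 0" .
    show ?thesis using J 1 2 by simp
  qed
  have "zh \<in> center H"
    using H.central_from_homog[OF zp] hz by simp
  hence "f zh = 0" using cker by blast
  thus False using nz unfolding zh_def by simp
qed

lemma G1:
  assumes c3: "(3::'f) \<noteq> 0" and a: "a \<in> od H" and nz: "f (br H a a) \<noteq> 0"
    and sp: "\<forall>x\<in>car L. \<forall>y\<in>car L. br L x y \<in> L.V.span {f (br H a a)}"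
  shows False
proof -
  have a1: "a \<in> part H 1" using a by (simp add: part_def)
  have aa: "br H a a \<in> ev H" using H.oo a by blast
  have "br H a (br H a a) = br H (br H a a) a - br H a (br H a a)"
    using H.jac_oo[OF a a a1] by simp
  moreover have "br H (br H a a) a = - br H a (br H a a)"
    using H.skew_e[OF aa H.od_car[OF a]] .
  ultimately have "br H a (br H a a) + br H a (br H a a) + br H a (br H a a) = 0"
    by (simp add: algebra_simps)
  hence z: "br H a (br H a a) = 0" using H.three_zero[OF c3] by blast
  show False using core[of 1 1 a a] a1 nz sp z by simp
qed

lemma G2:
  assumes i: "i < 2" "j < 2" "i' < 2" "j' < 2" and a: "a \<in> part H i" and b: "b \<in> part H j"
    and c: "c \<in> part H i'" and d: "d \<in> part H j'"
    and z1: "f (br H a c) = 0" "f (br H a d) = 0" "f (br H b c) = 0" "f (br H b d) = 0"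
    and nz: "f (br H a b) \<noteq> 0" "f (br H c d) \<noteq> 0"
    and sp: "\<forall>x\<in>car L. \<forall>y\<in>car L. br L x y \<in> L.V.span {f (br H a b)}"
  shows False
proof -
  have ac: "a \<in> car H" "b \<in> car H" "c \<in> car H" "d \<in> car H" using H.part_car i a b c d by blast+
  define zh where "zh = br H a b"
  have zc: "zh \<in> car H" unfolding zh_def using H.brc ac by blast
  have "f (br H c d) \<in> L.V.span {f zh}" using sp fbr fcar ac unfolding zh_def by metis
  then obtain s where s: "f (br H c d) = sm L s (f zh)" using L.V.span_singleton by blast
  have s0: "s \<noteq> 0" using s nz by auto
  have cdc: "br H c d \<in> car H" using H.brc ac by blast
  have cen: "br H c d - sm H s zh \<in> center H"
    using kerc[of "br H c d - sm H s zh"] H.car_diff[OF cdc H.car_sm[OF zc]] fdiff[OF cdc H.car_sm[OF zc]]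
      fsm[OF zc] s by simp
  define cc where "cc = br H c d - sm H s zh"
  have ccc: "cc \<in> car H" using cen unfolding cc_def center_def by blast
  have ecd: "br H c d = sm H s zh + cc" unfolding cc_def by simp
  have gen: "br H x zh = 0" if x: "x \<in> part H q" "q < 2" "f (br H x c) = 0" "f (br H x d) = 0" for x q
  proof -
    have xc: "x \<in> car H" using H.part_car x by blast
    have "br H x (br H c d) = 0"
      using H.jac_center[of q i' j' x c d] x i c d kerc H.brc xc ac by simp
    moreover have "br H x (br H c d) = sm H s (br H x zh) + br H x cc"
      unfolding ecd using H.br_addr H.br_smr H.car_sm zc ccc xc by simp
    moreover have "br H x cc = 0" using H.center_right[of cc x] cen xc unfolding cc_def by simp
    ultimately have "sm H s (br H x zh) = 0" by simp
    thus ?thesis using s0 by simp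
  qed
  have "br H a zh = 0" using gen[of a i] a i z1 by blast
  moreover have "br H b zh = 0" using gen[of b j] b i z1 by blast
  ultimately show False using core[OF i(1,2) a b nz(1) sp] unfolding zh_def by blast
qed

end

definition HB :: "(nat \<Rightarrow> 'f::field) \<Rightarrow> (nat \<Rightarrow> 'f) \<Rightarrow> nat \<Rightarrow> 'f" where
  "HB u v = (\<lambda>j. if j = 2 then u 0 * v 1 - u 1 * v 0 else 0)"

definition HQ :: "nat \<Rightarrow> ('f::field, nat \<Rightarrow> 'f) lsa" where
  "HQ q = (if q = 0 then Heis 1 0 else Hodd 1)"

lemma supp_in_iff: "v \<in> supp_in a b \<longleftrightarrow> (\<forall>j. (j < a \<or> b \<le> j) \<longrightarrow> v j = 0)"
  by (simp add: supp_in_def)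

lemma Heis10: "car (Heis 1 0) = supp_in 0 3" "ev (Heis 1 0) = supp_in 0 3" "od (Heis 1 0) = supp_in 3 3"
  "sm (Heis 1 0) = fsm" "br (Heis 1 0) = HB"
  by (auto simp: Heis_def HB_def fun_eq_iff)
lemma Hodd1: "car (Hodd 1) = supp_in 0 3" "ev (Hodd 1) = supp_in 0 1" "od (Hodd 1) = supp_in 1 3"
  "sm (Hodd 1) = fsm" "br (Hodd 1) = HB"
  by (auto simp: Hodd_def HB_def fun_eq_iff)
lemma HQ_simps: "car (HQ q) = supp_in 0 3" "ev (HQ q) = supp_in 0 (if q = 0 then 3 else 1)"
  "od (HQ q) = supp_in (if q = 0 then 3 else 1) 3" "sm (HQ q) = fsm" "br (HQ q) = HB"
  by (cases "q = 0"; simp only: HQ_def if_True if_False Heis10 Hodd1 refl; simp)+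
lemma Aab_simps: "car (Aab a b) = supp_in 0 (a + b)" "ev (Aab a b) = supp_in 0 a" "od (Aab a b) = supp_in a (a + b)"
  "sm (Aab a b) = fsm" "br (Aab a b) = (\<lambda>u v. 0)"
  by (auto simp: Aab_def)
lemma dsum_simps: "car (dsum A B) = car A \<times> car B" "ev (dsum A B) = ev A \<times> ev B"
  "od (dsum A B) = od A \<times> od B" "sm (dsum A B) c p = (sm A c (fst p), sm B c (snd p))"
  "br (dsum A B) p p' = (br A (fst p) (fst p'), br B (snd p) (snd p'))"
  by (auto simp: dsum_def split: prod.splits)

lemma gs_std:
  fixes L :: "('f::field, nat \<Rightarrow> 'f) lsa"
  assumes "car L = supp_in 0 n" "ev L = supp_in 0 m" "od L = supp_in m n" "m \<le> n" "sm L = fsm"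
    "\<And>x y. x \<in> car L \<Longrightarrow> y \<in> car L \<Longrightarrow> br L x y \<in> car L"
  shows "gs L"
  unfolding gs_def
proof (intro conjI ballI allI)
  show "0 \<in> ev L" "0 \<in> od L" using assms by (auto simp: supp_in_iff)
  show "ev L \<inter> od L = {0}" using assms by (auto simp: supp_in_iff fun_eq_iff) (meson not_le)
  show "car L = {a + b |a b. a \<in> ev L \<and> b \<in> od L}"
  proof (intro set_eqI iffI)
    fix x assume x: "x \<in> car L"
    have "x = (\<lambda>j. if j < m then x j else 0) + (\<lambda>j. if j < m then 0 else x j)" by (auto simp: fun_eq_iff)
    moreover have "(\<lambda>j. if j < m then x j else 0) \<in> ev L" "(\<lambda>j. if j < m then 0 else x j) \<in> od L"
      using x assms by (auto simp: supp_in_iff)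
    ultimately show "x \<in> {a + b |a b. a \<in> ev L \<and> b \<in> od L}" by blast
  next
    fix x assume "x \<in> {a + b |a b. a \<in> ev L \<and> b \<in> od L}"
    then obtain a b where "a \<in> ev L" "b \<in> od L" "x = a + b" by blast
    thus "x \<in> car L" using assms by (auto simp: supp_in_iff)
  qed
  show "\<And>x y. x \<in> ev L \<Longrightarrow> y \<in> ev L \<Longrightarrow> x - y \<in> ev L" using assms by (auto simp: supp_in_iff)
  show "\<And>x y. x \<in> od L \<Longrightarrow> y \<in> od L \<Longrightarrow> x - y \<in> od L" using assms by (auto simp: supp_in_iff)
  show "\<And>x y. x \<in> car L \<Longrightarrow> y \<in> car L \<Longrightarrow> x + y \<in> car L" using assms by (auto simp: supp_in_iff)
  show "\<And>x y. x \<in> car L \<Longrightarrow> y \<in> car L \<Longrightarrow> br L x y \<in> car L" using assms by blast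
  show "\<And>c x. x \<in> car L \<Longrightarrow> sm L c x \<in> car L" using assms by (auto simp: supp_in_iff fsm_def)
qed

lemma gs_dsum:
  assumes "gs A" "gs B" shows "gs (dsum A B)"
  unfolding gs_def
proof (intro conjI ballI allI)
  show "0 \<in> ev (dsum A B)" "0 \<in> od (dsum A B)" using gs_ev0[OF assms(1)] gs_od0[OF assms(1)] gs_ev0[OF assms(2)] gs_od0[OF assms(2)] by (auto simp: dsum_simps zero_prod_def)
  show "ev (dsum A B) \<inter> od (dsum A B) = {0}" using assms gs_evod[of A] gs_evod[of B]
    by (auto simp: dsum_simps zero_prod_def)
  show "car (dsum A B) = {a + b |a b. a \<in> ev (dsum A B) \<and> b \<in> od (dsum A B)}"
  proof (intro set_eqI iffI)
    fix x assume "x \<in> car (dsum A B)"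
    then obtain x1 x2 where x: "x = (x1, x2)" "x1 \<in> car A" "x2 \<in> car B" by (auto simp: dsum_simps)
    obtain a1 b1 where 1: "a1 \<in> ev A" "b1 \<in> od A" "x1 = a1 + b1" using x gs_car[OF assms(1)] by blast
    obtain a2 b2 where 2: "a2 \<in> ev B" "b2 \<in> od B" "x2 = a2 + b2" using x gs_car[OF assms(2)] by blast
    have "x = (a1, a2) + (b1, b2)" using x 1 2 by simp
    thus "x \<in> {a + b |a b. a \<in> ev (dsum A B) \<and> b \<in> od (dsum A B)}" using 1 2 by (auto simp: dsum_simps)
  next
    fix x assume "x \<in> {a + b |a b. a \<in> ev (dsum A B) \<and> b \<in> od (dsum A B)}"
    then obtain a b where ab: "a \<in> ev (dsum A B)" "b \<in> od (dsum A B)" "x = a + b" by blast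
    have "fst a \<in> ev A" "fst b \<in> od A" "snd a \<in> ev B" "snd b \<in> od B" using ab by (auto simp: dsum_simps)
    hence "fst a + fst b \<in> car A" "snd a + snd b \<in> car B"
      using gs_car[OF assms(1)] gs_car[OF assms(2)] by blast+
    thus "x \<in> car (dsum A B)" using ab by (auto simp: dsum_simps mem_Times_iff)
  qed
  show "\<And>x y. x \<in> ev (dsum A B) \<Longrightarrow> y \<in> ev (dsum A B) \<Longrightarrow> x - y \<in> ev (dsum A B)"
    using gs_evdiff[OF assms(1)] gs_evdiff[OF assms(2)] by (auto simp: dsum_simps mem_Times_iff)
  show "\<And>x y. x \<in> od (dsum A B) \<Longrightarrow> y \<in> od (dsum A B) \<Longrightarrow> x - y \<in> od (dsum A B)"
    using gs_oddiff[OF assms(1)] gs_oddiff[OF assms(2)] by (auto simp: dsum_simps mem_Times_iff)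
  show "\<And>x y. x \<in> car (dsum A B) \<Longrightarrow> y \<in> car (dsum A B) \<Longrightarrow> x + y \<in> car (dsum A B)"
    using gs_add[OF assms(1)] gs_add[OF assms(2)] by (auto simp: dsum_simps mem_Times_iff)
  show "\<And>x y. x \<in> car (dsum A B) \<Longrightarrow> y \<in> car (dsum A B) \<Longrightarrow> br (dsum A B) x y \<in> car (dsum A B)"
    using gs_br[OF assms(1)] gs_br[OF assms(2)] by (auto simp: dsum_simps mem_Times_iff)
  show "\<And>c x. x \<in> car (dsum A B) \<Longrightarrow> sm (dsum A B) c x \<in> car (dsum A B)"
    using gs_sm[OF assms(1)] gs_sm[OF assms(2)] by (auto simp: dsum_simps mem_Times_iff)
qed

lemma gs_HQ: "gs (HQ q :: ('f::field, nat \<Rightarrow> 'f) lsa)"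
  by (rule gs_std[where n=3 and m="if q = 0 then 3 else 1"]) (auto simp: HQ_simps supp_in_iff HB_def)
lemma gs_Aab: "gs (Aab a b :: ('f::field, nat \<Rightarrow> 'f) lsa)"
  by (rule gs_std[where n="a+b" and m=a]) (auto simp: Aab_simps supp_in_iff)
lemma gs_M: "gs (dsum (HQ q) (Aab a b) :: ('f::field, (nat \<Rightarrow> 'f) \<times> (nat \<Rightarrow> 'f)) lsa)"
  by (rule gs_dsum[OF gs_HQ gs_Aab])

context lsa_ctx begin

lemma ev_add: "x \<in> ev L \<Longrightarrow> y \<in> ev L \<Longrightarrow> x + y \<in> ev L" using V.subspace_add[OF ev_sub] .
lemma od_add: "x \<in> od L \<Longrightarrow> y \<in> od L \<Longrightarrow> x + y \<in> od L" using V.subspace_add[OF od_sub] .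
lemma ev_sm: "x \<in> ev L \<Longrightarrow> sm L c x \<in> ev L" using V.subspace_scale[OF ev_sub] .
lemma od_sm: "x \<in> od L \<Longrightarrow> sm L c x \<in> od L" using V.subspace_scale[OF od_sub] .
lemma ev_sum: "(\<And>i. i \<in> A \<Longrightarrow> f i \<in> ev L) \<Longrightarrow> sum f A \<in> ev L" using V.subspace_sum[OF ev_sub] .
lemma od_sum: "(\<And>i. i \<in> A \<Longrightarrow> f i \<in> od L) \<Longrightarrow> sum f A \<in> od L" using V.subspace_sum[OF od_sub] .
lemma cen_add: "x \<in> center L \<Longrightarrow> y \<in> center L \<Longrightarrow> x + y \<in> center L" using V.subspace_add[OF center_sub] .
lemma cen_sm: "x \<in> center L \<Longrightarrow> sm L c x \<in> center L" using V.subspace_scale[OF center_sub] .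
lemma cen_sum: "(\<And>i. i \<in> A \<Longrightarrow> f i \<in> center L) \<Longrightarrow> sum f A \<in> center L" using V.subspace_sum[OF center_sub] .
lemma cen_car: "x \<in> center L \<Longrightarrow> x \<in> car L" unfolding center_def by blast
lemma cen_left: "x \<in> center L \<Longrightarrow> y \<in> car L \<Longrightarrow> br L x y = 0" unfolding center_def by blast

lemma build_iso:
  assumes q: "q < 2" and x1: "x1 \<in> ev L" and x2: "x2 \<in> part L q" and z: "z \<in> part L q"
    and Ef: "finite Eb" and Ee: "Eb \<subseteq> ev L" and Of: "finite Ob" and Oo: "Ob \<subseteq> od L"
    and b12: "br L x1 x2 = z" and b11: "br L x1 x1 = 0" and b22: "br L x2 x2 = 0" and z0: "z \<noteq> 0"
    and zcen: "z \<in> center L" and Ecen: "Eb \<subseteq> center L" and Ocen: "Ob \<subseteq> center L"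
    and ind: "V.independent (insert z (Eb \<union> Ob))" and zEO: "z \<notin> Eb \<union> Ob" and EO: "Eb \<inter> Ob = {}"
    and sp: "car L \<subseteq> V.span (insert x1 (insert x2 (insert z (Eb \<union> Ob))))"
    and cE: "card Eb = a" and cO: "card Ob = b"
  shows "isomorphic L (dsum (HQ q) (Aab a b))"
proof -
  obtain ee where ee: "bij_betw ee {..<a} Eb"
    using ex_bij_betw_nat_finite[OF Ef] cE by (metis atLeast0LessThan)
  obtain oo where oo: "bij_betw oo {..<b} Ob"
    using ex_bij_betw_nat_finite[OF Of] cO by (metis atLeast0LessThan)
  have eeE: "ee i \<in> Eb" if "i < a" for i using ee that bij_betwE by blast
  have ooO: "oo j \<in> Ob" if "j < b" for j using oo that bij_betwE by blast
  have x1c: "x1 \<in> car L" using ev_car x1 by blast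
  have x2c: "x2 \<in> car L" using part_car q x2 by blast
  have zc: "z \<in> car L" using part_car q z by blast
  have Ec: "v \<in> car L" if "v \<in> Eb" for v using that Ee ev_car by blast
  have Oc: "v \<in> car L" if "v \<in> Ob" for v using that Oo od_car by blast
  define SE where "SE w = (\<Sum>i<a. sm L (w i) (ee i))" for w :: "nat \<Rightarrow> 'f"
  define SO where "SO w = (\<Sum>j<b. sm L (w (a + j)) (oo j))" for w :: "nat \<Rightarrow> 'f"
  define R where "R u w = sm L (u (2::nat)) z + SE w + SO w" for u w :: "nat \<Rightarrow> 'f"
  define X where "X u = sm L (u (0::nat)) x1 + sm L (u 1) x2" for u :: "nat \<Rightarrow> 'f"
  define G where "G u w = X u + R u w" for u w
  have SEev: "SE w \<in> ev L" for w unfolding SE_def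
  proof (rule ev_sum)
    fix j assume "j \<in> {..<a}"
    hence "ee j \<in> ev L" using Ee eeE by blast
    thus "sm L (w (j)) (ee j) \<in> ev L" by (rule ev_sm)
  qed
  have SOod: "SO w \<in> od L" for w unfolding SO_def
  proof (rule od_sum)
    fix j assume "j \<in> {..<b}"
    hence "oo j \<in> od L" using Oo ooO by blast
    thus "sm L (w (a + j)) (oo j) \<in> od L" by (rule od_sm)
  qed
  have SEcen: "SE w \<in> center L" for w unfolding SE_def
  proof (rule cen_sum)
    fix j assume "j \<in> {..<a}"
    hence "ee j \<in> center L" using Ecen eeE by blast
    thus "sm L (w (j)) (ee j) \<in> center L" by (rule cen_sm)
  qed
  have SOcen: "SO w \<in> center L" for w unfolding SO_def
  proof (rule cen_sum)
    fix j assume "j \<in> {..<b}"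
    hence "oo j \<in> center L" using Ocen ooO by blast
    thus "sm L (w (a + j)) (oo j) \<in> center L" by (rule cen_sm)
  qed
  have Rcen: "R u w \<in> center L" for u w unfolding R_def by (intro cen_add cen_sm zcen SEcen SOcen)
  have Rc: "R u w \<in> car L" for u w using Rcen cen_car by blast
  have Xc: "X u \<in> car L" for u unfolding X_def by (intro car_add car_sm x1c x2c)
  have Gc: "G u w \<in> car L" for u w unfolding G_def by (intro car_add Xc Rc)
  have b21: "br L x2 x1 = - z" using skew_e'[OF x2c x1] b12 by simp
  have brX: "br L (X u) (X v) = sm L (u 0 * v 1 - u 1 * v 0) z" for u v
  proof -
    have "br L (X u) (X v) = sm L (v 0) (sm L (u 0) (br L x1 x1) + sm L (u 1) (br L x2 x1)) +
        sm L (v 1) (sm L (u 0) (br L x1 x2) + sm L (u 1) (br L x2 x2))"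
      unfolding X_def using x1c x2c car_sm
      by (simp add: br_addl br_addr br_sml br_smr car_add)
    also have "\<dots> = sm L (v 1 * u 0) z - sm L (v 0 * u 1) z"
      using b11 b12 b21 b22 by (simp add: V.scale_minus_right)
    also have "\<dots> = sm L (u 0 * v 1 - u 1 * v 0) z" by (simp add: V.scale_left_diff_distrib mult.commute)
    finally show ?thesis .
  qed
  have brG: "br L (G u w) (G v w') = sm L (u 0 * v 1 - u 1 * v 0) z" for u w v w'
  proof -
    have "br L (G u w) (G v w') = br L (X u) (X v) + br L (X u) (R v w') + (br L (R u w) (X v) + br L (R u w) (R v w'))"
      unfolding G_def using Xc Rc by (simp add: br_addl br_addr car_add)
    also have "\<dots> = br L (X u) (X v)"
      using center_right[OF Rcen Xc] cen_left[OF Rcen Xc] cen_left[OF Rcen Rc] by simp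
    finally show ?thesis using brX by simp
  qed
  have SE_add: "SE (w + w') = SE w + SE w'" for w w'
    unfolding SE_def by (simp add: V.scale_left_distrib sum.distrib)
  have SO_add: "SO (w + w') = SO w + SO w'" for w w'
    unfolding SO_def by (simp add: V.scale_left_distrib sum.distrib)
  have SE_diff: "SE (w - w') = SE w - SE w'" for w w'
    unfolding SE_def by (simp add: V.scale_left_diff_distrib sum_subtractf)
  have SO_diff: "SO (w - w') = SO w - SO w'" for w w'
    unfolding SO_def by (simp add: V.scale_left_diff_distrib sum_subtractf)
  have SE_sm: "SE (fsm c w) = sm L c (SE w)" for c w
    unfolding SE_def fsm_def by (simp add: V.scale_sum_right)
  have SO_sm: "SO (fsm c w) = sm L c (SO w)" for c w
    unfolding SO_def fsm_def by (simp add: V.scale_sum_right)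
  have SE0: "SE (\<lambda>_. 0) = 0" unfolding SE_def by simp
  have SO0: "SO (\<lambda>_. 0) = 0" unfolding SO_def by simp
  have G_add: "G (u + u') (w + w') = G u w + G u' w'" for u u' w w'
    unfolding G_def X_def R_def SE_add SO_add by (simp add: V.scale_left_distrib algebra_simps)
  have G_diff: "G (u - u') (w - w') = G u w - G u' w'" for u u' w w'
    unfolding G_def X_def R_def SE_diff SO_diff by (simp add: V.scale_left_diff_distrib algebra_simps)
  have G_sm: "G (fsm c u) (fsm c w) = sm L c (G u w)" for c u w
    unfolding G_def X_def R_def SE_sm SO_sm by (simp add: fsm_def V.scale_right_distrib)
  define M where "M = (dsum (HQ q) (Aab a b) :: ('f, (nat \<Rightarrow> 'f) \<times> (nat \<Rightarrow> 'f)) lsa)"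
  define g where "g p = G (fst p) (snd p)" for p
  have carM: "car M = supp_in 0 3 \<times> supp_in 0 (a + b)" unfolding M_def by (simp add: dsum_simps HQ_simps Aab_simps)
  have evM: "ev M = supp_in 0 (if q = 0 then 3 else 1) \<times> supp_in 0 a" unfolding M_def by (simp add: dsum_simps HQ_simps Aab_simps)
  have odM: "od M = supp_in (if q = 0 then 3 else 1) 3 \<times> supp_in a (a + b)" unfolding M_def by (simp add: dsum_simps HQ_simps Aab_simps)
  have smM: "sm M c p = (fsm c (fst p), fsm c (snd p))" for c p unfolding M_def by (simp add: dsum_simps HQ_simps Aab_simps)
  have brM: "br M p p' = (HB (fst p) (fst p'), (\<lambda>_. 0))" for p p' unfolding M_def by (simp add: dsum_simps HQ_simps Aab_simps zero_fun_def)
  have qc: "(q = 0 \<and> x2 \<in> ev L \<and> z \<in> ev L) \<or> (q = 1 \<and> x2 \<in> od L \<and> z \<in> od L)"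
    using part_cases[OF q x2] part_cases[OF q z] by auto
  have hom: "lsa_hom M L g"
    unfolding lsa_hom_def image_subset_iff
  proof (intro conjI ballI allI)
    show "\<And>x. g x \<in> car L" unfolding g_def using Gc by blast
    show "\<And>x y. g (x + y) = g x + g y" unfolding g_def using G_add by simp
    show "\<And>c x. g (sm M c x) = sm L c (g x)" unfolding g_def smM using G_sm by simp
    show "\<And>x y. g (br M x y) = br L (g x) (g y)"
    proof -
      fix x y :: "(nat \<Rightarrow> 'f) \<times> (nat \<Rightarrow> 'f)"
      have "g (br M x y) = G (HB (fst x) (fst y)) (\<lambda>_. 0)" unfolding g_def brM by simp
      also have "\<dots> = sm L (fst x 0 * fst y 1 - fst x 1 * fst y 0) z"
        unfolding G_def X_def R_def SE0 SO0 by (simp add: HB_def)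
      finally show "g (br M x y) = br L (g x) (g y)" unfolding g_def using brG by simp
    qed
    show "\<And>x. x \<in> ev M \<Longrightarrow> g x \<in> ev L"
    proof -
      fix x assume x: "x \<in> ev M"
      have w: "snd x (a + j) = 0" for j using x unfolding evM by (auto simp: supp_in_iff)
      have so: "SO (snd x) = 0" unfolding SO_def w by simp
      show "g x \<in> ev L"
      proof (cases "q = 0")
        case True
        thus ?thesis unfolding g_def G_def X_def R_def so using qc x1 SEev
          by (intro ev_add ev_sm; simp add: ev0)+
      next
        case False
        hence "fst x 1 = 0" "fst x 2 = 0" using x unfolding evM by (auto simp: supp_in_iff)
        thus ?thesis unfolding g_def G_def X_def R_def so using x1 SEev
          by (simp add: ev_add ev_sm)
      qed
    qed
    show "\<And>x. x \<in> od M \<Longrightarrow> g x \<in> od L"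
    proof -
      fix x assume x: "x \<in> od M"
      have w: "snd x i = 0" if "i < a" for i using x that unfolding odM by (auto simp: supp_in_iff)
      have se: "SE (snd x) = 0" unfolding SE_def using w by simp
      show "g x \<in> od L"
      proof (cases "q = 0")
        case True
        hence "fst x 0 = 0" "fst x 1 = 0" "fst x 2 = 0" using x unfolding odM by (auto simp: supp_in_iff)
        thus ?thesis unfolding g_def G_def X_def R_def se using SOod by simp
      next
        case False
        hence "fst x 0 = 0" using x unfolding odM by (auto simp: supp_in_iff)
        thus ?thesis unfolding g_def G_def X_def R_def se using qc False SOod
          by (simp add: od_add od_sm)
      qed
    qed
  qed
  have x1nc: "x1 \<notin> center L" using cen_left[OF _ x2c, of x1] b12 z0 by auto
  have x2nc: "x2 \<notin> center L" using cen_left[OF _ x1c, of x2] b21 z0 by auto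
  have x12: "x1 \<noteq> x2" using b11 b12 z0 by auto
  define S0 where "S0 = insert z (Eb \<union> Ob)"
  have S0f: "finite S0" unfolding S0_def using Ef Of by simp
  have x2S0: "x2 \<notin> S0" unfolding S0_def using x2nc zcen Ecen Ocen by blast
  have x1S0: "x1 \<notin> insert x2 S0" unfolding S0_def using x1nc zcen Ecen Ocen x12 by blast
  have sumS0: "(\<Sum>v\<in>S0. sm L (r v) v) = sm L (r z) z + (\<Sum>v\<in>Eb. sm L (r v) v) + (\<Sum>v\<in>Ob. sm L (r v) v)" for r
    unfolding S0_def using zEO EO Ef Of by (simp add: sum.union_disjoint add.assoc)
  have ee_inj: "inj_on ee {..<a}" using ee bij_betw_imp_inj_on by blast
  have oo_inj: "inj_on oo {..<b}" using oo bij_betw_imp_inj_on by blast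
  have reE: "(\<Sum>v\<in>Eb. h v) = (\<Sum>i<a. h (ee i))" for h :: "'v \<Rightarrow> 'v"
    using sum.reindex_bij_betw[OF ee, of h] by simp
  have reO: "(\<Sum>v\<in>Ob. h v) = (\<Sum>j<b. h (oo j))" for h :: "'v \<Rightarrow> 'v"
    using sum.reindex_bij_betw[OF oo, of h] by simp
  have e1: "G (\<lambda>j. if j = 1 then 1 else 0) (\<lambda>_. 0) = x2"
    unfolding G_def X_def R_def SE0 SO0 by simp
  have e0: "G (\<lambda>j. if j = 0 then 1 else 0) (\<lambda>_. 0) = x1"
    unfolding G_def X_def R_def SE0 SO0 by simp
  have G_zero: "d = 0 \<and> e = 0" if de: "(d, e) \<in> car M" "G d e = 0" for d e
  proof -
    have "br L (G d e) x2 = sm L (d 0) z" using brG[of d e "\<lambda>j. if j = 1 then 1 else 0" "\<lambda>_. 0"] e1 by simp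
    hence "sm L (d 0) z = 0" using de br_0l x2c by simp
    hence d0: "d 0 = 0" using z0 by simp
    have "br L (G d e) x1 = sm L (- d 1) z" using brG[of d e "\<lambda>j. if j = 0 then 1 else 0" "\<lambda>_. 0"] e0 by simp
    hence "sm L (- d 1) z = 0" using de br_0l x1c by simp
    hence d1: "d 1 = 0" using z0 by simp
    have R0: "sm L (d 2) z + SE e + SO e = 0" using de d0 d1 unfolding G_def X_def R_def by simp
    define c where "c v = (if v = z then d 2 else if v \<in> Eb then e (inv_into {..<a} ee v)
        else e (a + inv_into {..<b} oo v))" for v
    have cE: "c (ee i) = e i" if "i < a" for i
      using that eeE zEO inv_into_f_f[OF ee_inj] unfolding c_def by auto
    have cO: "c (oo j) = e (a + j)" if "j < b" for j
      using that ooO zEO EO inv_into_f_f[OF oo_inj] unfolding c_def by auto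
    have "(\<Sum>v\<in>S0. sm L (c v) v) = sm L (c z) z + (\<Sum>i<a. sm L (c (ee i)) (ee i)) + (\<Sum>j<b. sm L (c (oo j)) (oo j))"
      unfolding sumS0 reE reO ..
    also have "\<dots> = sm L (d 2) z + SE e + SO e"
      unfolding SE_def SO_def using cE cO by (simp add: c_def)
    finally have sum0: "(\<Sum>v\<in>S0. sm L (c v) v) = 0" using R0 by simp
    have cz: "c v = 0" if "v \<in> S0" for v
      using V.independentD[OF ind[folded S0_def] S0f subset_refl sum0 that] .
    have "d 2 = 0" using cz[of z] unfolding S0_def c_def by simp
    hence dd: "d j = 0" for j using d0 d1 de(1) unfolding carM
      by (cases "j < 3") (auto simp: supp_in_iff less_Suc_eq numeral_3_eq_3 numeral_2_eq_2)
    have ee0: "e i = 0" for i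
    proof (cases "i < a")
      case True thus ?thesis using cz[of "ee i"] cE[OF True] eeE[OF True] unfolding S0_def by simp
    next
      case False
      show ?thesis
      proof (cases "i < a + b")
        case True
        hence "i - a < b" using False by simp
        thus ?thesis using cz[of "oo (i - a)"] cO[of "i - a"] ooO[of "i - a"] False unfolding S0_def by simp
      next
        case False2: False
        thus ?thesis using de(1) unfolding carM by (auto simp: supp_in_iff)
      qed
    qed
    show ?thesis using dd ee0 by (auto simp: fun_eq_iff)
  qed
  have carM_diff: "p - p' \<in> car M" if "p \<in> car M" "p' \<in> car M" for p p'
    using that unfolding carM by (auto simp: supp_in_iff mem_Times_iff)
  have inj: "inj_on g (car M)"
  proof (rule inj_onI)
    fix p p' assume p: "p \<in> car M" "p' \<in> car M" "g p = g p'"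
    have "G (fst p - fst p') (snd p - snd p') = 0" using p G_diff unfolding g_def by simp
    moreover have "(fst p - fst p', snd p - snd p') \<in> car M" using carM_diff[OF p(1,2)] by (simp add: minus_prod_def)
    ultimately have "fst p - fst p' = 0 \<and> snd p - snd p' = 0" using G_zero by blast
    thus "p = p'" by (simp add: prod_eq_iff)
  qed
  have surj: "g ` car M = car L"
  proof
    show "g ` car M \<subseteq> car L" unfolding g_def using Gc by blast
  next
    show "car L \<subseteq> g ` car M"
    proof
      fix y assume y: "y \<in> car L"
      have "y \<in> V.span (insert x1 (insert x2 S0))" using sp y unfolding S0_def by blast
      then obtain r where r: "y = (\<Sum>v\<in>insert x1 (insert x2 S0). sm L (r v) v)"
        using V.span_finite[of "insert x1 (insert x2 S0)"] S0f by auto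
      define u where "u j = (if j = 0 then r x1 else if j = 1 then r x2 else if j = 2 then r z else 0)" for j :: nat
      define w where "w i = (if i < a then r (ee i) else if i < a + b then r (oo (i - a)) else 0)" for i
      have "y = sm L (r x1) x1 + sm L (r x2) x2 + (sm L (r z) z + (\<Sum>i<a. sm L (r (ee i)) (ee i)) + (\<Sum>j<b. sm L (r (oo j)) (oo j)))"
        unfolding r using S0f x1S0 x2S0 by (simp add: sumS0 reE reO add.assoc)
      also have "\<dots> = G u w" unfolding G_def X_def R_def SE_def SO_def u_def w_def by simp
      finally have "y = g (u, w)" unfolding g_def by simp
      moreover have "(u, w) \<in> car M" unfolding carM u_def w_def by (auto simp: supp_in_iff)
      ultimately show "y \<in> g ` car M" by blast
    qed
  qed
  have "lsa_iso L M (inv_into (car M) g)"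
    using iso_inverse[OF hom _ _ gs] inj surj gs_M unfolding M_def bij_betw_def by blast
  thus ?thesis unfolding isomorphic_def M_def by blast
qed
end

context lsa_ctx begin

lemma indep_union:
  assumes A: "V.independent A" "A \<subseteq> ev L" and B: "V.independent B" "B \<subseteq> od L"
  shows "V.independent (A \<union> B)"
  unfolding V.independent_explicit_finite_subsets
proof (intro allI impI ballI)
  fix S u v assume S: "S \<subseteq> A \<union> B" "finite S" and s0: "(\<Sum>v\<in>S. sm L (u v) v) = 0" and v: "v \<in> S"
  have split: "(\<Sum>v\<in>S. sm L (u v) v) = (\<Sum>v\<in>S \<inter> A. sm L (u v) v) + (\<Sum>v\<in>S - A. sm L (u v) v)"
    using sum.Int_Diff[OF S(2)] by blast
  have e: "(\<Sum>v\<in>S \<inter> A. sm L (u v) v) \<in> ev L" by (rule ev_sum, rule ev_sm) (use A in blast)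
  have o: "(\<Sum>v\<in>S - A. sm L (u v) v) \<in> od L" by (rule od_sum, rule od_sm) (use S B in blast)
  have z: "(\<Sum>v\<in>S \<inter> A. sm L (u v) v) = 0 \<and> (\<Sum>v\<in>S - A. sm L (u v) v) = 0"
    using evod_zero[OF e o] s0 split by simp
  show "u v = 0"
  proof (cases "v \<in> A")
    case True
    thus ?thesis using V.independentD[OF A(1), of "S \<inter> A" u v] z S v by auto
  next
    case False
    thus ?thesis using V.independentD[OF B(1), of "S - A" u v] z S v by auto
  qed
qed

end

locale fd_ctx = lsa_ctx +
  assumes fin: "fin_dim L"
begin

lemma finB: "\<exists>B. finite B \<and> V.span B = car L" using fin unfolding fin_dim_def by blast

lemma ind_fin: "V.independent S \<Longrightarrow> S \<subseteq> car L \<Longrightarrow> finite S"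
proof -
  assume i: "V.independent S" and s: "S \<subseteq> car L"
  obtain B where B: "finite B" "V.span B = car L" using finB by blast
  show "finite S" using V.independent_span_bound[OF B(1) i] s B(2) by blast
qed

lemma basis_fin:
  assumes "W \<subseteq> car L"
  obtains B where "B \<subseteq> W" "V.independent B" "W \<subseteq> V.span B" "card B = V.dim W" "finite B"
proof -
  obtain B where B: "B \<subseteq> W" "V.independent B" "W \<subseteq> V.span B" "card B = V.dim W"
    using V.basis_exists[of W] by blast
  have "finite B" using ind_fin B assms by blast
  thus ?thesis using that B by blast
qed

lemma basis_ext:
  assumes W: "W \<subseteq> car L" and S: "S \<subseteq> W" "V.independent S"
  obtains B where "S \<subseteq> B" "B \<subseteq> W" "V.independent B" "W \<subseteq> V.span B" "card B = V.dim W" "finite B"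
proof -
  obtain B where B: "S \<subseteq> B" "B \<subseteq> W" "V.independent B" "W \<subseteq> V.span B"
    using V.maximal_independent_subset_extend[OF S] by blast
  have "card B = V.dim W" using V.basis_card_eq_dim B by blast
  moreover have "finite B" using ind_fin B W by blast
  ultimately show ?thesis using that B by blast
qed

lemma dim1:
  assumes "S \<subseteq> car L" "V.dim S = 1"
  shows "\<exists>z. z \<in> S \<and> z \<noteq> 0 \<and> S \<subseteq> V.span {z}"
proof -
  obtain B where B: "B \<subseteq> S" "V.independent B" "S \<subseteq> V.span B" "card B = V.dim S" "finite B"
    using basis_fin assms(1) by blast
  hence "card B = 1" using assms(2) by simp
  hence "\<exists>z. B = {z}" using card_1_singleton_iff[of B] by simp
  then obtain z where "B = {z}" by blast
  thus ?thesis using B V.dependent_zero by auto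
qed

lemma dim0:
  assumes "S \<subseteq> car L" "V.dim S = 0"
  shows "S \<subseteq> {0}"
proof -
  obtain B where B: "B \<subseteq> S" "V.independent B" "S \<subseteq> V.span B" "card B = V.dim S" "finite B"
    using basis_fin assms(1) by blast
  hence "B = {}" using assms(2) by simp
  thus ?thesis using B by simp
qed

lemma br_in_sub:
  assumes W: "V.subspace W"
    and h: "\<And>i j a b. i < 2 \<Longrightarrow> j < 2 \<Longrightarrow> a \<in> part L i \<Longrightarrow> b \<in> part L j \<Longrightarrow> br L a b \<in> W"
    and x: "x \<in> car L" and y: "y \<in> car L"
  shows "br L x y \<in> W"
proof -
  obtain a b where ab: "a \<in> ev L" "b \<in> od L" "x = a + b" using decomp[OF x] by blast
  obtain c d where cd: "c \<in> ev L" "d \<in> od L" "y = c + d" using decomp[OF y] by blast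
  have p: "a \<in> part L 0" "b \<in> part L 1" "c \<in> part L 0" "d \<in> part L 1" using ab cd by (auto simp: part_def)
  have "br L x y = (br L a c + br L a d) + (br L b c + br L b d)"
    using ab cd by (simp add: br_addl br_addr ev_car od_car car_add)
  moreover have "br L a c \<in> W" "br L a d \<in> W" "br L b c \<in> W" "br L b d \<in> W"
    using h[of 0 0 a c] h[of 0 1 a d] h[of 1 0 b c] h[of 1 1 b d] p by auto
  ultimately show ?thesis using V.subspace_add[OF W] by simp
qed

lemma derived_car: "derived L \<subseteq> car L"
  unfolding derived_def brspan_def by (rule span_car) (use brc in blast)

lemma br_derived: "x \<in> car L \<Longrightarrow> y \<in> car L \<Longrightarrow> br L x y \<in> derived L"
  unfolding derived_def brspan_def by (rule V.span_base) blast

definition Pz where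
  "Pz z \<longleftrightarrow> (\<forall>x\<in>car L. \<forall>y\<in>car L. br L x y \<in> module.span (sm L) {z})"

lemma Pz_change:
  assumes "Pz z" "w \<in> V.span {z}" "w \<noteq> 0" shows "Pz w"
proof -
  obtain t where t: "w = sm L t z" using assms(2) V.span_singleton by blast
  have t0: "t \<noteq> 0" using t assms(3) by auto
  have "z = sm L (inverse t) w" using t t0 by simp
  hence "z \<in> V.span {w}" by (simp add: V.span_base V.span_scale)
  hence "V.span {z} \<subseteq> V.span {w}" using V.span_minimal[of "{z}" "V.span {w}"] by simp
  thus ?thesis using assms(1) unfolding Pz_def by blast
qed

lemma F1:
  assumes dd: "dim_ev L (derived L) + dim_od L (derived L) = 1"
  shows "\<exists>p z. p < 2 \<and> z \<noteq> 0 \<and> Pz z \<and> z \<in> derived L \<and>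
     (\<forall>i<2. \<forall>j<2. \<forall>a\<in>part L i. \<forall>b\<in>part L j. (i + j) mod 2 \<noteq> p \<longrightarrow> br L a b = 0)"
proof -
  have cases: "(V.dim (derived L \<inter> ev L) = 1 \<and> V.dim (derived L \<inter> od L) = 0) \<or>
     (V.dim (derived L \<inter> ev L) = 0 \<and> V.dim (derived L \<inter> od L) = 1)"
    using dd unfolding dim_ev_def dim_od_def by linarith
  have hom: "br L a b \<in> derived L \<inter> part L ((i + j) mod 2)" if "i < 2" "j < 2" "a \<in> part L i" "b \<in> part L j" for i j a b
    using br_derived lsa_grade[OF lsa] part_car that by blast
  obtain p where p: "p < 2" "V.dim (derived L \<inter> part L p) = 1" "V.dim (derived L \<inter> part L (1 - p)) = 0"
    using cases by (metis part0 part1 diff_zero diff_self_eq_0 One_nat_def less_2_cases_iff zero_less_Suc lessI)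
  obtain z0 where z0: "z0 \<in> derived L \<inter> part L p" "z0 \<noteq> 0" "derived L \<inter> part L p \<subseteq> V.span {z0}"
    using dim1[OF _ p(2)] derived_car by blast
  have zero: "derived L \<inter> part L (1 - p) \<subseteq> {0}" using dim0[OF _ p(3)] derived_car by blast
  have H1: "br L a b \<in> V.span {z0}" if "i < 2" "j < 2" "a \<in> part L i" "b \<in> part L j" for i j a b
  proof (cases "(i + j) mod 2 = p")
    case True thus ?thesis using hom[OF that] z0 by blast
  next
    case False
    hence "(i + j) mod 2 = 1 - p" using p(1) by linarith
    hence "br L a b = 0" using hom[OF that] zero by auto
    thus ?thesis by (simp add: V.span_zero)
  qed
  have H0: "br L a b = 0" if "i < 2" "j < 2" "a \<in> part L i" "b \<in> part L j" "(i + j) mod 2 \<noteq> p" for i j a b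
  proof -
    have "(i + j) mod 2 = 1 - p" using p(1) that(5) by linarith
    thus ?thesis using hom[OF that(1-4)] zero by auto
  qed
  have "Pz z0" unfolding Pz_def using br_in_sub[OF V.subspace_span] H1 by blast
  thus ?thesis using p(1) z0(1,2) H0 by blast
qed

lemma lcs_mem: "x \<in> lcs L n \<Longrightarrow> y \<in> car L \<Longrightarrow> br L x y \<in> lcs L (Suc n)"
  unfolding lcs.simps brspan_def by (rule V.span_base) blast

lemma z_central:
  assumes nil: "nilpotent L" and P: "Pz z" and z0: "z \<noteq> 0" and zc: "z \<in> car L"
  shows "z \<in> center L"
proof (rule ccontr)
  assume nc: "z \<notin> center L"
  then obtain x where x: "x \<in> car L" "br L z x \<noteq> 0" using zc unfolding center_def by blast
  obtain t where t: "br L z x = sm L t z" using P x zc V.span_singleton unfolding Pz_def by blast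
  have t0: "t \<noteq> 0" using t x by auto
  have e: "br L z (sm L (inverse t) x) = z" using br_smr[OF zc x(1)] t t0 by simp
  have "z \<in> lcs L n" for n
  proof (induction n)
    case 0 thus ?case using zc by simp
  next
    case (Suc n)
    have "br L z (sm L (inverse t) x) \<in> lcs L (Suc n)" using lcs_mem[OF Suc car_sm[OF x(1)]] .
    thus ?case using e by simp
  qed
  moreover obtain n where "lcs L n = {0}" using nil unfolding nilpotent_def by blast
  ultimately show False using z0 by blast
qed

end

locale fwd = fd_ctx L for L :: "('f::field, 'v::ab_group_add) lsa" +
  fixes H :: "('f, 'h::ab_group_add) lsa" and f :: "'h \<Rightarrow> 'v"
  assumes cq: "central_quot H L f" and nil: "nilpotent L" and c2: "(2::'f) \<noteq> 0" and c3: "(3::'f) \<noteq> 0"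
begin

sublocale C: cq_ctx H L f
  using cq lsa unfolding central_quot_def cq_ctx_def cq_ctx_axioms_def lsa_ctx_def by blast

lemma G1L:
  assumes y: "y \<in> od L" and nz: "br L y y \<noteq> 0" and P: "Pz (br L y y)"
  shows False
proof -
  obtain yh where yh: "yh \<in> part H 1" "f yh = y" using C.lift_part[of 1 y] y by (auto simp: part_def)
  have yho: "yh \<in> od H" using yh by (simp add: part_def)
  have yhc: "yh \<in> car H" using C.H.od_car[OF yho] .
  have e: "f (br H yh yh) = br L y y" using C.fbr[OF yhc yhc] yh by simp
  show False using C.G1[OF c3 yho] e nz P unfolding Pz_def by simp
qed

lemma G2L:
  assumes i: "i < 2" "j < 2" "i' < 2" "j' < 2" and a: "a \<in> part L i" and b: "b \<in> part L j"
    and c: "c \<in> part L i'" and d: "d \<in> part L j'"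
    and z1: "br L a c = 0" "br L a d = 0" "br L b c = 0" "br L b d = 0"
    and nz: "br L a b \<noteq> 0" "br L c d \<noteq> 0" and P: "Pz (br L a b)"
  shows False
proof -
  obtain ah where ah: "ah \<in> part H i" "f ah = a" using C.lift_part i a by blast
  obtain bh where bh: "bh \<in> part H j" "f bh = b" using C.lift_part i b by blast
  obtain ch where ch: "ch \<in> part H i'" "f ch = c" using C.lift_part i c by blast
  obtain dh where dh: "dh \<in> part H j'" "f dh = d" using C.lift_part i d by blast
  have hc: "ah \<in> car H" "bh \<in> car H" "ch \<in> car H" "dh \<in> car H"
    using C.H.part_car i ah bh ch dh by blast+
  have e: "f (br H ah ch) = br L a c" "f (br H ah dh) = br L a d" "f (br H bh ch) = br L b c"
    "f (br H bh dh) = br L b d" "f (br H ah bh) = br L a b" "f (br H ch dh) = br L c d"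
    using C.fbr hc ah bh ch dh by simp_all
  show False using C.G2[OF i ah(1) bh(1) ch(1) dh(1)] e z1 nz P unfolding Pz_def by simp
qed

lemma exists_hom:
  assumes "z \<in> derived L" "z \<noteq> 0"
  shows "\<exists>i j a b. i < 2 \<and> j < 2 \<and> a \<in> part L i \<and> b \<in> part L j \<and> br L a b \<noteq> 0"
proof (rule ccontr)
  assume "\<not> ?thesis"
  hence h: "br L a b \<in> {0}" if "i < 2" "j < 2" "a \<in> part L i" "b \<in> part L j" for i j a b
    using that by blast
  have "br L x y \<in> {0}" if "x \<in> car L" "y \<in> car L" for x y
    apply (rule br_in_sub[OF V.subspace_single_0])
    apply (rule h; assumption)
    using that by auto
  hence "{br L a b |a b. a \<in> car L \<and> b \<in> car L} \<subseteq> {0}" by blast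
  hence "derived L \<subseteq> {0}" unfolding derived_def brspan_def
    using V.span_minimal[OF _ V.subspace_single_0] by blast
  thus False using assms by blast
qed

lemma om_ex: "Pz z \<Longrightarrow> a \<in> car L \<Longrightarrow> b \<in> car L \<Longrightarrow> br L a b = sm L (SOME t. br L a b = sm L t z) z"
proof -
  assume P: "Pz z" and a: "a \<in> car L" and b: "b \<in> car L"
  have "\<exists>t. br L a b = sm L t z" using P a b V.span_singleton unfolding Pz_def by blast
  thus ?thesis by (rule someI_ex)
qed

lemma caseE:
  assumes x1: "x1 \<in> ev L" and x2: "x2 \<in> ev L" and bz: "br L x1 x2 = z" and z0: "z \<noteq> 0" and P: "Pz z"
    and oo0: "\<And>a b. a \<in> od L \<Longrightarrow> b \<in> od L \<Longrightarrow> br L a b = 0"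
    and eo0: "\<And>a b. a \<in> ev L \<Longrightarrow> b \<in> od L \<Longrightarrow> br L a b = 0"
    and zc: "z \<in> center L"
  shows "isomorphic L (dsum (HQ 0) (Aab (V.dim (ev L) - 3) (V.dim (od L))))"
proof -
  define om where "om a b = (SOME t. br L a b = sm L t z)" for a b
  have om: "br L a b = sm L (om a b) z" if "a \<in> car L" "b \<in> car L" for a b
    unfolding om_def using om_ex[OF P that] .
  have x1c: "x1 \<in> car L" and x2c: "x2 \<in> car L" using x1 x2 ev_car by blast+
  have b11: "br L x1 x1 = 0" using skew_e[OF x1 x1c] two_zero[OF c2] by (metis add_eq_0_iff)
  have b22: "br L x2 x2 = 0" using skew_e[OF x2 x2c] two_zero[OF c2] by (metis add_eq_0_iff)
  have b21: "br L x2 x1 = - z" using skew_e[OF x2 x1c] bz by simp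
  define W where "W = {v \<in> ev L. br L v x1 = 0 \<and> br L v x2 = 0}"
  have Wev: "W \<subseteq> ev L" unfolding W_def by blast
  have Wsub: "V.subspace W"
    unfolding V.subspace_def W_def
  proof (intro conjI ballI allI)
    show "0 \<in> {v \<in> ev L. br L v x1 = 0 \<and> br L v x2 = 0}" using ev0 br_0l x1c x2c by simp
  next
    fix x y assume x: "x \<in> {v \<in> ev L. br L v x1 = 0 \<and> br L v x2 = 0}" and y: "y \<in> {v \<in> ev L. br L v x1 = 0 \<and> br L v x2 = 0}"
    thus "x + y \<in> {v \<in> ev L. br L v x1 = 0 \<and> br L v x2 = 0}"
      using ev_add br_addl ev_car x1c x2c by simp
  next
    fix c x assume x: "x \<in> {v \<in> ev L. br L v x1 = 0 \<and> br L v x2 = 0}"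
    thus "sm L c x \<in> {v \<in> ev L. br L v x1 = 0 \<and> br L v x2 = 0}"
      using ev_sm br_sml ev_car x1c x2c by simp
  qed
  define pr where "pr y = y - sm L (om y x2) x1 + sm L (om y x1) x2" for y
  have prW: "pr y \<in> W" if y: "y \<in> ev L" for y
  proof -
    have yc: "y \<in> car L" using ev_car y .
    have e1: "br L (pr y) x1 = 0"
      unfolding pr_def using om[OF yc x1c] b11 b21
      by (simp add: br_addl br_diffl br_sml yc x1c x2c car_sm car_diff)
    have e2: "br L (pr y) x2 = 0"
      unfolding pr_def using om[OF yc x2c] b22 bz
      by (simp add: br_addl br_diffl br_sml yc x1c x2c car_sm car_diff)
    have "pr y \<in> ev L" unfolding pr_def using y x1 x2
      by (intro ev_add V.subspace_diff[OF ev_sub] ev_sm)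
    thus ?thesis using e1 e2 unfolding W_def by blast
  qed
  have prd: "y = pr y + sm L (om y x2) x1 - sm L (om y x1) x2" for y unfolding pr_def by simp
  have WW: "br L v w = 0" if "v \<in> W" "w \<in> W" for v w
  proof (rule ccontr)
    assume nz: "br L v w \<noteq> 0"
    have vw: "v \<in> ev L" "w \<in> ev L" "br L v x1 = 0" "br L v x2 = 0" "br L w x1 = 0" "br L w x2 = 0"
      using that unfolding W_def by blast+
    have "br L x1 v = 0" "br L x1 w = 0" "br L x2 v = 0" "br L x2 w = 0"
      using vw skew_e x1 x2 ev_car by (metis neg_equal_0_iff_equal)+
    thus False using G2L[of 0 0 0 0 x1 x2 v w] x1 x2 vw nz z0 P bz by (simp add: part_def)
  qed
  have Wcen: "W \<subseteq> center L"
  proof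
    fix v assume v: "v \<in> W"
    have ve: "v \<in> ev L" "v \<in> car L" using v Wev ev_car by blast+
    show "v \<in> center L"
    proof (rule centerI[OF ve(2)])
      fix y assume y: "y \<in> ev L"
      have yc: "y \<in> car L" using y ev_car by blast
      have "br L v y = br L v (pr y) + sm L (om y x2) (br L v x1) - sm L (om y x1) (br L v x2)"
        using prW[OF y] Wev ev_car x1c x2c ve
        by (subst prd[of y]) (simp add: br_addr br_diffr br_smr car_sm car_add subset_iff)
      thus "br L v y = 0" using WW[OF v prW[OF y]] v unfolding W_def by simp
    next
      fix y assume "y \<in> od L" thus "br L v y = 0" using eo0 ve by blast
    qed
  qed
  have zev: "z \<in> ev L" using ee[OF x1 x2] bz by simp
  have zW: "z \<in> W" unfolding W_def using zev cen_left[OF zc] x1c x2c by blast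
  have Wc: "W \<subseteq> car L" using Wev ev_car by blast
  obtain BW where BW: "{z} \<subseteq> BW" "BW \<subseteq> W" "V.independent BW" "W \<subseteq> V.span BW" "finite BW"
  proof -
    have zz: "{z} \<subseteq> W" "V.independent {z}" using zW z0 by auto
    show ?thesis by (rule basis_ext[OF Wc zz], rule that, assumption+)
  qed
  have spBW: "V.span BW \<subseteq> W" using V.span_minimal[OF BW(2) Wsub] .
  have x2nW: "x2 \<notin> W" using b21 z0 unfolding W_def by auto
  have x1nW: "x1 \<notin> V.span (insert x2 BW)"
  proof
    assume "x1 \<in> V.span (insert x2 BW)"
    then obtain t where t: "x1 - sm L t x2 \<in> V.span BW" using V.span_breakdown_eq by blast
    hence "x1 - sm L t x2 \<in> W" using spBW by blast
    hence "br L (x1 - sm L t x2) x2 = 0" unfolding W_def by blast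
    moreover have "br L (x1 - sm L t x2) x2 = z" using bz b22 by (simp add: br_diffl br_sml x1c x2c car_sm)
    ultimately show False using z0 by simp
  qed
  define Bev where "Bev = insert x1 (insert x2 BW)"
  have indBev: "V.independent Bev"
    unfolding Bev_def using x1nW x2nW spBW BW(3) V.span_base
    by (auto simp: V.independent_insert)
  have Bev_ev: "Bev \<subseteq> ev L" unfolding Bev_def using x1 x2 BW Wev by blast
  have ev_sp: "ev L \<subseteq> V.span Bev"
  proof
    fix y assume y: "y \<in> ev L"
    have "pr y \<in> V.span Bev" using prW[OF y] BW(4) V.span_mono[of BW Bev] unfolding Bev_def by blast
    moreover have "x1 \<in> V.span Bev" "x2 \<in> V.span Bev" unfolding Bev_def by (auto intro: V.span_base)
    ultimately have "pr y + sm L (om y x2) x1 - sm L (om y x1) x2 \<in> V.span Bev"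
      by (intro V.span_add V.span_diff V.span_scale)
    thus "y \<in> V.span Bev" using prd[of y] by simp
  qed
  have cardBev: "card Bev = V.dim (ev L)" using V.basis_card_eq_dim[OF Bev_ev ev_sp indBev] .
  have x1BW: "x1 \<notin> insert x2 BW" using x1nW V.span_base by blast
  have x2BW: "x2 \<notin> BW" using x2nW BW(2) by blast
  have "card Bev = card BW + 2" unfolding Bev_def using x1BW x2BW BW(5) by simp
  hence cBW: "card (BW - {z}) = V.dim (ev L) - 3" using cardBev BW(1,5) by (simp add: card_Diff_singleton)
  obtain Cb where Cb: "Cb \<subseteq> od L" "V.independent Cb" "od L \<subseteq> V.span Cb" "card Cb = V.dim (od L)" "finite Cb"
    using basis_fin[of "od L"] od_car by blast
  have Ccen: "Cb \<subseteq> center L"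
  proof
    fix v assume v: "v \<in> Cb"
    have vo: "v \<in> od L" "v \<in> car L" using v Cb od_car by blast+
    show "v \<in> center L"
    proof (rule centerI[OF vo(2)])
      fix y assume y: "y \<in> ev L" thus "br L v y = 0" using eo0[OF y vo(1)] skew_e[OF y vo(2)] by simp
    next
      fix y assume "y \<in> od L" thus "br L v y = 0" using oo0 vo by blast
    qed
  qed
  have insE: "insert z ((BW - {z}) \<union> Cb) = BW \<union> Cb" using BW(1) by blast
  have ind: "V.independent (insert z ((BW - {z}) \<union> Cb))"
    unfolding insE using indep_union[OF BW(3) _ Cb(2,1)] BW(2) Wev by blast
  have zC: "z \<notin> Cb"
  proof
    assume "z \<in> Cb" hence "z \<in> od L" using Cb(1) by blast
    thus False using zev z0 evod by blast
  qed
  have EC: "(BW - {z}) \<inter> Cb = {}"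
  proof (rule ccontr)
    assume "(BW - {z}) \<inter> Cb \<noteq> {}"
    then obtain v where v: "v \<in> BW" "v \<in> Cb" by blast
    have "v \<in> ev L" "v \<in> od L" using v BW(2) Wev Cb(1) by blast+
    hence "v = 0" using evod by blast
    thus False using v(2) Cb(2) V.dependent_zero by blast
  qed
  have sp: "car L \<subseteq> V.span (insert x1 (insert x2 (insert z ((BW - {z}) \<union> Cb))))"
  proof
    fix y assume y: "y \<in> car L"
    obtain a b where ab: "a \<in> ev L" "b \<in> od L" "y = a + b" using decomp[OF y] by blast
    have sub: "Bev \<union> Cb \<subseteq> insert x1 (insert x2 (insert z ((BW - {z}) \<union> Cb)))" unfolding Bev_def insE by blast
    have "a \<in> V.span (Bev \<union> Cb)" using ev_sp ab V.span_mono[of Bev "Bev \<union> Cb"] by blast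
    moreover have "b \<in> V.span (Bev \<union> Cb)" using Cb ab V.span_mono[of Cb "Bev \<union> Cb"] by blast
    ultimately have "y \<in> V.span (Bev \<union> Cb)" using ab V.span_add by simp
    thus "y \<in> V.span (insert x1 (insert x2 (insert z ((BW - {z}) \<union> Cb))))" using V.span_mono[OF sub] by blast
  qed
  show ?thesis
    using build_iso[of 0 x1 x2 z "BW - {z}" Cb, OF _ x1 _ _ _ _ Cb(5) Cb(1) bz b11 b22 z0 zc _ Ccen ind _ EC sp cBW Cb(4)]
      x2 zev BW Wev Wcen zC by (auto simp: part_def)
qed

end

context fwd begin

lemma caseO:
  assumes x1: "x1 \<in> ev L" and y1: "y1 \<in> od L" and bz: "br L x1 y1 = z" and z0: "z \<noteq> 0" and P: "Pz z"
    and ee0: "\<And>a b. a \<in> ev L \<Longrightarrow> b \<in> ev L \<Longrightarrow> br L a b = 0"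
    and oo0: "\<And>a b. a \<in> od L \<Longrightarrow> b \<in> od L \<Longrightarrow> br L a b = 0"
    and zc: "z \<in> center L"
  shows "isomorphic L (dsum (HQ 1) (Aab (V.dim (ev L) - 1) (V.dim (od L) - 2)))"
proof -
  define om where "om a b = (SOME t. br L a b = sm L t z)" for a b
  have om: "br L a b = sm L (om a b) z" if "a \<in> car L" "b \<in> car L" for a b
    unfolding om_def using om_ex[OF P that] .
  have x1c: "x1 \<in> car L" using x1 ev_car by blast
  have y1c: "y1 \<in> car L" using y1 od_car by blast
  have zod: "z \<in> od L" using eo[OF x1 y1] bz by simp
  have b11: "br L x1 x1 = 0" using ee0 x1 by blast
  have byy: "br L y1 y1 = 0" using oo0 y1 by blast
  have byx: "br L y1 x1 = - z" using skew_e'[OF y1c x1] bz by simp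
  define W0 where "W0 = {v \<in> ev L. br L v y1 = 0}"
  define W1 where "W1 = {w \<in> od L. br L x1 w = 0}"
  have W0ev: "W0 \<subseteq> ev L" unfolding W0_def by blast
  have W1od: "W1 \<subseteq> od L" unfolding W1_def by blast
  have W0sub: "V.subspace W0"
    unfolding V.subspace_def W0_def
  proof (intro conjI ballI allI)
    show "0 \<in> {v \<in> ev L. br L v y1 = 0}" using ev0 br_0l y1c by simp
  next
    fix x y assume "x \<in> {v \<in> ev L. br L v y1 = 0}" "y \<in> {v \<in> ev L. br L v y1 = 0}"
    thus "x + y \<in> {v \<in> ev L. br L v y1 = 0}" using ev_add br_addl ev_car y1c by simp
  next
    fix c x assume "x \<in> {v \<in> ev L. br L v y1 = 0}"
    thus "sm L c x \<in> {v \<in> ev L. br L v y1 = 0}" using ev_sm br_sml ev_car y1c by simp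
  qed
  have W1sub: "V.subspace W1"
    unfolding V.subspace_def W1_def
  proof (intro conjI ballI allI)
    show "0 \<in> {w \<in> od L. br L x1 w = 0}" using od0 br_0r x1c by simp
  next
    fix x y assume "x \<in> {w \<in> od L. br L x1 w = 0}" "y \<in> {w \<in> od L. br L x1 w = 0}"
    thus "x + y \<in> {w \<in> od L. br L x1 w = 0}" using od_add br_addr od_car x1c by simp
  next
    fix c x assume "x \<in> {w \<in> od L. br L x1 w = 0}"
    thus "sm L c x \<in> {w \<in> od L. br L x1 w = 0}" using od_sm br_smr od_car x1c by simp
  qed
  define pr0 where "pr0 y = y - sm L (om y y1) x1" for y
  define pr1 where "pr1 w = w - sm L (om x1 w) y1" for w
  have pr0W: "pr0 y \<in> W0" if y: "y \<in> ev L" for y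
  proof -
    have yc: "y \<in> car L" using ev_car y .
    have "br L (pr0 y) y1 = 0"
      unfolding pr0_def using om[OF yc y1c] bz by (simp add: br_diffl br_sml yc x1c y1c car_sm)
    moreover have "pr0 y \<in> ev L" unfolding pr0_def using y x1 by (intro V.subspace_diff[OF ev_sub] ev_sm)
    ultimately show ?thesis unfolding W0_def by blast
  qed
  have pr1W: "pr1 w \<in> W1" if w: "w \<in> od L" for w
  proof -
    have wc: "w \<in> car L" using od_car w .
    have "br L x1 (pr1 w) = 0"
      unfolding pr1_def using om[OF x1c wc] bz by (simp add: br_diffr br_smr wc x1c y1c car_sm)
    moreover have "pr1 w \<in> od L" unfolding pr1_def using w y1 by (intro V.subspace_diff[OF od_sub] od_sm)
    ultimately show ?thesis unfolding W1_def by blast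
  qed
  have prd0: "y = pr0 y + sm L (om y y1) x1" for y unfolding pr0_def by simp
  have prd1: "w = pr1 w + sm L (om x1 w) y1" for w unfolding pr1_def by simp
  have WW: "br L v w = 0" if "v \<in> W0" "w \<in> W1" for v w
  proof (rule ccontr)
    assume nz: "br L v w \<noteq> 0"
    have vw: "v \<in> ev L" "w \<in> od L" "br L v y1 = 0" "br L x1 w = 0"
      using that unfolding W0_def W1_def by blast+
    have "br L x1 v = 0" using ee0 x1 vw by blast
    moreover have "br L y1 v = 0" using skew_e'[OF y1c vw(1)] vw by simp
    moreover have "br L y1 w = 0" using oo0 y1 vw by blast
    ultimately show False using G2L[of 0 1 0 1 x1 y1 v w] x1 y1 vw nz z0 P bz by (simp add: part_def)
  qed
  have W0cen: "W0 \<subseteq> center L"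
  proof
    fix v assume v: "v \<in> W0"
    have ve: "v \<in> ev L" "v \<in> car L" using v W0ev ev_car by blast+
    show "v \<in> center L"
    proof (rule centerI[OF ve(2)])
      fix y assume "y \<in> ev L" thus "br L v y = 0" using ee0 ve by blast
    next
      fix y assume y: "y \<in> od L"
      have "br L v y = br L v (pr1 y) + sm L (om x1 y) (br L v y1)"
        using pr1W[OF y] W1od od_car y1c ve
        by (subst prd1[of y]) (simp add: br_addr br_smr car_sm subset_iff)
      thus "br L v y = 0" using WW[OF v pr1W[OF y]] v unfolding W0_def by simp
    qed
  qed
  have W1cen: "W1 \<subseteq> center L"
  proof
    fix w assume w: "w \<in> W1"
    have wo: "w \<in> od L" "w \<in> car L" "br L x1 w = 0" using w W1od od_car unfolding W1_def by blast+
    show "w \<in> center L"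
    proof (rule centerI[OF wo(2)])
      fix y assume y: "y \<in> ev L"
      have p0: "pr0 y \<in> ev L" "pr0 y \<in> car L" using pr0W[OF y] W0ev ev_car by blast+
      have "br L w y = br L w (pr0 y) + sm L (om y y1) (br L w x1)"
        using p0 x1c wo by (subst prd0[of y]) (simp add: br_addr br_smr car_sm)
      moreover have "br L w (pr0 y) = 0" using skew_e'[OF wo(2) p0(1)] WW[OF pr0W[OF y] w] by simp
      moreover have "br L w x1 = 0" using skew_e'[OF wo(2) x1] wo(3) by simp
      ultimately show "br L w y = 0" by simp
    next
      fix y assume "y \<in> od L" thus "br L w y = 0" using oo0 wo by blast
    qed
  qed
  have zW1: "z \<in> W1" unfolding W1_def using zod skew_e[OF x1] cen_left[OF zc x1c] zc cen_car by simp
  have W0c: "W0 \<subseteq> car L" using W0ev ev_car by blast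
  have W1c: "W1 \<subseteq> car L" using W1od od_car by blast
  obtain B0 where B0: "B0 \<subseteq> W0" "V.independent B0" "W0 \<subseteq> V.span B0" "card B0 = V.dim W0" "finite B0"
    by (rule basis_fin[OF W0c])
  obtain B1 where B1: "{z} \<subseteq> B1" "B1 \<subseteq> W1" "V.independent B1" "W1 \<subseteq> V.span B1" "finite B1"
  proof -
    have zz: "{z} \<subseteq> W1" "V.independent {z}" using zW1 z0 by auto
    show ?thesis by (rule basis_ext[OF W1c zz], rule that, assumption+)
  qed
  have sp0: "V.span B0 \<subseteq> W0" using V.span_minimal[OF B0(1) W0sub] .
  have sp1: "V.span B1 \<subseteq> W1" using V.span_minimal[OF B1(2) W1sub] .
  have x1nW: "x1 \<notin> W0" using bz z0 unfolding W0_def by auto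
  have y1nW: "y1 \<notin> W1" using bz z0 unfolding W1_def by auto
  define Bev where "Bev = insert x1 B0"
  define Bod where "Bod = insert y1 B1"
  have indBev: "V.independent Bev" unfolding Bev_def using x1nW sp0 B0(2) V.span_base
    by (auto simp: V.independent_insert)
  have indBod: "V.independent Bod" unfolding Bod_def using y1nW sp1 B1(3) V.span_base
    by (auto simp: V.independent_insert)
  have Bev_ev: "Bev \<subseteq> ev L" unfolding Bev_def using x1 B0(1) W0ev by blast
  have Bod_od: "Bod \<subseteq> od L" unfolding Bod_def using y1 B1(2) W1od by blast
  have ev_sp: "ev L \<subseteq> V.span Bev"
  proof
    fix y assume y: "y \<in> ev L"
    have "pr0 y \<in> V.span Bev" using pr0W[OF y] B0(3) V.span_mono[of B0 Bev] unfolding Bev_def by blast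
    moreover have "x1 \<in> V.span Bev" unfolding Bev_def by (auto intro: V.span_base)
    ultimately have "pr0 y + sm L (om y y1) x1 \<in> V.span Bev" by (intro V.span_add V.span_scale)
    thus "y \<in> V.span Bev" using prd0[of y] by simp
  qed
  have od_sp: "od L \<subseteq> V.span Bod"
  proof
    fix y assume y: "y \<in> od L"
    have "pr1 y \<in> V.span Bod" using pr1W[OF y] B1(4) V.span_mono[of B1 Bod] unfolding Bod_def by blast
    moreover have "y1 \<in> V.span Bod" unfolding Bod_def by (auto intro: V.span_base)
    ultimately have "pr1 y + sm L (om x1 y) y1 \<in> V.span Bod" by (intro V.span_add V.span_scale)
    thus "y \<in> V.span Bod" using prd1[of y] by simp
  qed
  have cardBev: "card Bev = V.dim (ev L)" using V.basis_card_eq_dim[OF Bev_ev ev_sp indBev] .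
  have cardBod: "card Bod = V.dim (od L)" using V.basis_card_eq_dim[OF Bod_od od_sp indBod] .
  have x1B0: "x1 \<notin> B0" using x1nW B0(1) by blast
  have y1B1: "y1 \<notin> B1" using y1nW B1(2) by blast
  have cB0: "card B0 = V.dim (ev L) - 1" using cardBev x1B0 B0(5) unfolding Bev_def by simp
  have "card B1 = V.dim (od L) - 1" using cardBod y1B1 B1(5) unfolding Bod_def by simp
  hence cB1: "card (B1 - {z}) = V.dim (od L) - 2" using B1(1,5) by (simp add: card_Diff_singleton)
  have insE: "insert z (B0 \<union> (B1 - {z})) = B0 \<union> B1" using B1(1) by blast
  have ind: "V.independent (insert z (B0 \<union> (B1 - {z})))"
    unfolding insE using indep_union[OF B0(2) _ B1(3)] B0(1) W0ev B1(2) W1od by blast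
  have zB0: "z \<notin> B0"
  proof
    assume "z \<in> B0" hence "z \<in> ev L" using B0(1) W0ev by blast
    thus False using zod z0 evod by blast
  qed
  have EO: "B0 \<inter> (B1 - {z}) = {}"
  proof (rule ccontr)
    assume "B0 \<inter> (B1 - {z}) \<noteq> {}"
    then obtain v where v: "v \<in> B0" "v \<in> B1" by blast
    have "v \<in> ev L" "v \<in> od L" using v B0(1) W0ev B1(2) W1od by blast+
    hence "v = 0" using evod by blast
    thus False using v(1) B0(2) V.dependent_zero by blast
  qed
  have sp: "car L \<subseteq> V.span (insert x1 (insert y1 (insert z (B0 \<union> (B1 - {z})))))"
  proof
    fix y assume y: "y \<in> car L"
    obtain a b where ab: "a \<in> ev L" "b \<in> od L" "y = a + b" using decomp[OF y] by blast
    have sub: "Bev \<union> Bod \<subseteq> insert x1 (insert y1 (insert z (B0 \<union> (B1 - {z}))))"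
      unfolding Bev_def Bod_def insE by blast
    have "a \<in> V.span (Bev \<union> Bod)" using ev_sp ab V.span_mono[of Bev "Bev \<union> Bod"] by blast
    moreover have "b \<in> V.span (Bev \<union> Bod)" using od_sp ab V.span_mono[of Bod "Bev \<union> Bod"] by blast
    ultimately have "y \<in> V.span (Bev \<union> Bod)" using ab V.span_add by simp
    thus "y \<in> V.span (insert x1 (insert y1 (insert z (B0 \<union> (B1 - {z})))))" using V.span_mono[OF sub] by blast
  qed
  have B1f: "finite (B1 - {z})" using B1(5) by simp
  have B1o: "B1 - {z} \<subseteq> od L" using B1(2) W1od by blast
  have B0e: "B0 \<subseteq> ev L" using B0(1) W0ev by blast
  show ?thesis
    using build_iso[of 1 x1 y1 z B0 "B1 - {z}", OF _ x1 _ _ B0(5) B0e B1f B1o bz b11 byy z0 zc _ _ ind _ EO sp cB0 cB1]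
      y1 zod B0(1) W0cen B1(2) W1cen zB0 by (auto simp: part_def)
qed

end

context fwd begin

lemma forward:
  assumes dd: "dim_ev L (derived L) + dim_od L (derived L) = 1"
  shows "isomorphic L (dsum (HQ 0) (Aab (V.dim (ev L) - 3) (V.dim (od L)))) \<or>
         isomorphic L (dsum (HQ 1) (Aab (V.dim (ev L) - 1) (V.dim (od L) - 2)))"
proof -
  obtain p z0 where pz: "p < 2" "z0 \<noteq> 0" "Pz z0" "z0 \<in> derived L"
    and H0: "\<And>i j a b. i < 2 \<Longrightarrow> j < 2 \<Longrightarrow> a \<in> part L i \<Longrightarrow> b \<in> part L j \<Longrightarrow> (i + j) mod 2 \<noteq> p \<Longrightarrow> br L a b = 0"
    using F1[OF dd] by blast
  obtain i j a b where ab: "i < 2" "j < 2" "a \<in> part L i" "b \<in> part L j" "br L a b \<noteq> 0"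
    using exists_hom[OF pz(4,2)] by blast
  have ac: "a \<in> car L" "b \<in> car L" using part_car ab by blast+
  have Pb: "Pz (br L x y)" if "x \<in> car L" "y \<in> car L" "br L x y \<noteq> 0" for x y
    using Pz_change[OF pz(3)] pz(3) that unfolding Pz_def by blast
  have par: "(i + j) mod 2 = p" using H0 ab by blast
  show ?thesis
  proof (cases "p = 0")
    case True
    have G1': "br L y y = 0" if y: "y \<in> od L" for y
    proof (rule ccontr)
      assume nz: "br L y y \<noteq> 0"
      have "Pz (br L y y)" using Pb od_car y nz by blast
      thus False using G1L y nz by blast
    qed
    have oo0: "br L y1 y2 = 0" if y: "y1 \<in> od L" "y2 \<in> od L" for y1 y2
    proof -
      have yc: "y1 \<in> car L" "y2 \<in> car L" using y od_car by blast+
      have "br L (y1 + y2) (y1 + y2) = 0" using G1' od_add y by blast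
      moreover have "br L (y1 + y2) (y1 + y2) = br L y1 y1 + br L y1 y2 + (br L y2 y1 + br L y2 y2)"
        using yc by (simp add: br_addl br_addr car_add)
      ultimately have "br L y1 y2 + br L y1 y2 = 0" using G1' y skew_oo[OF y(2,1)] by simp
      thus ?thesis using two_zero[OF c2] by blast
    qed
    have eo0: "br L x y = 0" if "x \<in> ev L" "y \<in> od L" for x y
      using H0[of 0 1 x y] that True by (simp add: part_def)
    have ij: "i = 0" "j = 0"
    proof -
      have "i = j" using par True ab(1,2) by (auto simp: less_2_cases_iff)
      moreover have "i \<noteq> 1"
      proof
        assume "i = 1" hence "a \<in> od L" "b \<in> od L" using ab \<open>i = j\<close> by (auto simp: part_def)
        thus False using oo0 ab(5) by blast
      qed
      ultimately show "i = 0" "j = 0" using ab(1) by (auto simp: less_2_cases_iff)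
    qed
    have ae: "a \<in> ev L" "b \<in> ev L" using ab ij by (auto simp: part_def)
    have zc: "br L a b \<in> center L" using z_central[OF nil Pb[OF ac ab(5)] ab(5) brc[OF ac]] .
    show ?thesis using caseE[OF ae refl ab(5) Pb[OF ac ab(5)] oo0 eo0 zc] by blast
  next
    case False
    hence p1: "p = 1" using pz(1) by simp
    have ee0: "br L x y = 0" if "x \<in> ev L" "y \<in> ev L" for x y
      using H0[of 0 0 x y] that p1 by (simp add: part_def)
    have oo0: "br L x y = 0" if "x \<in> od L" "y \<in> od L" for x y
      using H0[of 1 1 x y] that p1 by (simp add: part_def)
    have "(i = 0 \<and> j = 1) \<or> (i = 1 \<and> j = 0)" using par p1 ab(1,2) by (auto simp: less_2_cases_iff)
    then obtain x1 y1 where xy: "x1 \<in> ev L" "y1 \<in> od L" "br L x1 y1 \<noteq> 0"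
    proof
      assume "i = 0 \<and> j = 1"
      hence "a \<in> ev L" "b \<in> od L" using ab by (auto simp: part_def)
      thus ?thesis using that ab(5) by blast
    next
      assume "i = 1 \<and> j = 0"
      hence o: "a \<in> od L" "b \<in> ev L" using ab by (auto simp: part_def)
      have "br L b a = - br L a b" using skew_e[OF o(2) ac(1)] by simp
      thus ?thesis using that o ab(5) by simp
    qed
    have xc: "x1 \<in> car L" "y1 \<in> car L" using xy ev_car od_car by blast+
    have zc: "br L x1 y1 \<in> center L" using z_central[OF nil Pb[OF xc xy(3)] xy(3) brc[OF xc]] .
    show ?thesis using caseO[OF xy(1,2) refl xy(3) Pb[OF xc xy(3)] ee0 oo0 zc] by blast
  qed
qed

end

definition Odp :: "nat \<Rightarrow> nat \<Rightarrow> nat \<Rightarrow> nat \<Rightarrow> bool" where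
  "Odp q a b j = ((q = 1 \<and> (j = 1 \<or> j = 2 \<or> j = 3)) \<or> (4 + a \<le> j \<and> j < 4 + a + b) \<or>
      (4 + 2*a + b \<le> j \<and> j < 4 + 2*a + 2*b))"
definition inT :: "nat \<Rightarrow> nat \<Rightarrow> nat \<Rightarrow> bool" where
  "inT a b t = (t = 2 \<or> t = 3 \<or> (4 + a + b \<le> t \<and> t < 4 + 2*a + 2*b))"
definition sig :: "nat \<Rightarrow> nat \<Rightarrow> nat \<Rightarrow> nat" where
  "sig a b t = (if t = 2 then 1 else if t = 3 then 2 else t - (a + b))"
definition brH :: "nat \<Rightarrow> nat \<Rightarrow> (nat \<Rightarrow> 'f::field) \<Rightarrow> (nat \<Rightarrow> 'f) \<Rightarrow> nat \<Rightarrow> 'f" where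
  "brH a b p r = (\<lambda>t. if inT a b t then p 0 * r (sig a b t) - r 0 * p (sig a b t) else 0)"

definition HH :: "nat \<Rightarrow> nat \<Rightarrow> nat \<Rightarrow> ('f::field, nat \<Rightarrow> 'f) lsa" where
  "HH q a b = \<lparr> car = supp_in 0 (4 + 2*a + 2*b),
     ev = {v \<in> supp_in 0 (4 + 2*a + 2*b). \<forall>j. Odp q a b j \<longrightarrow> v j = 0},
     od = {v \<in> supp_in 0 (4 + 2*a + 2*b). \<forall>j. \<not> Odp q a b j \<longrightarrow> v j = 0},
     sm = fsm, br = brH a b \<rparr>"

lemma sig_props:
  assumes "inT a b t"
  shows "sig a b t \<noteq> 0" "sig a b t < 4 + 2*a + 2*b" "Odp q a b (sig a b t) = Odp q a b t" "t \<noteq> 0"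
    "t < 4 + 2*a + 2*b"
  using assms unfolding inT_def sig_def Odp_def by auto

lemma not_inT0: "\<not> inT a b 0" by (simp add: inT_def)
lemma not_Odp0: "\<not> Odp q a b 0" by (simp add: Odp_def)

lemma vs_fsm: "vector_space (fsm :: 'f::field \<Rightarrow> (nat \<Rightarrow> 'f) \<Rightarrow> _)"
  by unfold_locales (auto simp: fsm_def fun_eq_iff algebra_simps)

lemma subspace_fsm: "module.subspace (fsm :: 'f::field \<Rightarrow> (nat \<Rightarrow> 'f) \<Rightarrow> _) S \<longleftrightarrow>
   0 \<in> S \<and> (\<forall>x\<in>S. \<forall>y\<in>S. x + y \<in> S) \<and> (\<forall>c. \<forall>x\<in>S. fsm c x \<in> S)"
  by (rule module.subspace_def[OF vs_fsm[folded module_iff_vector_space]])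

lemma HH_simps: "car (HH q a b) = supp_in 0 (4 + 2*a + 2*b)"
  "ev (HH q a b) = {v \<in> supp_in 0 (4 + 2*a + 2*b). \<forall>j. Odp q a b j \<longrightarrow> v j = 0}"
  "od (HH q a b) = {v \<in> supp_in 0 (4 + 2*a + 2*b). \<forall>j. \<not> Odp q a b j \<longrightarrow> v j = 0}"
  "sm (HH q a b) = fsm" "br (HH q a b) = brH a b"
  by (simp_all add: HH_def)

lemma part_HH: "i < 2 \<Longrightarrow> part (HH q a b) i =
   {v \<in> supp_in 0 (4 + 2*a + 2*b). \<forall>j. (Odp q a b j \<noteq> (i = 1)) \<longrightarrow> v j = 0}"
  by (cases i) (auto simp: part_def HH_simps)

lemma is_lsa_HH: "is_lsa (HH q a b :: ('f::field, nat \<Rightarrow> 'f) lsa)"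
  unfolding is_lsa_def
proof (intro conjI ballI allI impI)
  let ?N = "4 + 2*a + 2*b"
  show "vector_space (sm (HH q a b :: ('f, nat \<Rightarrow> 'f) lsa))" by (simp add: HH_simps vs_fsm)
  show "module.subspace (sm (HH q a b :: ('f, nat \<Rightarrow> 'f) lsa)) (ev (HH q a b))"
    by (simp add: HH_simps subspace_fsm) (auto simp: supp_in_iff fsm_def)
  show "module.subspace (sm (HH q a b :: ('f, nat \<Rightarrow> 'f) lsa)) (od (HH q a b))"
    by (simp add: HH_simps subspace_fsm) (auto simp: supp_in_iff fsm_def)
  show "ev (HH q a b :: ('f, nat \<Rightarrow> 'f) lsa) \<inter> od (HH q a b) = {0}"
    by (auto simp: HH_simps supp_in_iff fun_eq_iff) (metis)
  show "car (HH q a b :: ('f, nat \<Rightarrow> 'f) lsa) = {x + y |x y. x \<in> ev (HH q a b) \<and> y \<in> od (HH q a b)}"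
  proof (intro set_eqI iffI)
    fix x :: "nat \<Rightarrow> 'f" assume x: "x \<in> car (HH q a b)"
    have "x = (\<lambda>j. if Odp q a b j then 0 else x j) + (\<lambda>j. if Odp q a b j then x j else 0)" by (auto simp: fun_eq_iff)
    moreover have "(\<lambda>j. if Odp q a b j then 0 else x j) \<in> ev (HH q a b)"
      "(\<lambda>j. if Odp q a b j then x j else 0) \<in> od (HH q a b)" using x by (auto simp: HH_simps supp_in_iff)
    ultimately show "x \<in> {x + y |x y. x \<in> ev (HH q a b) \<and> y \<in> od (HH q a b)}" by blast
  next
    fix x :: "nat \<Rightarrow> 'f" assume "x \<in> {x + y |x y. x \<in> ev (HH q a b) \<and> y \<in> od (HH q a b)}"
    thus "x \<in> car (HH q a b)" by (auto simp: HH_simps supp_in_iff)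
  qed
  fix x y :: "nat \<Rightarrow> 'f"
  assume x: "x \<in> car (HH q a b :: ('f, nat \<Rightarrow> 'f) lsa)" and y: "y \<in> car (HH q a b :: ('f, nat \<Rightarrow> 'f) lsa)"
  show "br (HH q a b) x y \<in> car (HH q a b)"
    using sig_props by (auto simp: HH_simps supp_in_iff brH_def) (metis not_le)
  fix z :: "nat \<Rightarrow> 'f" assume "z \<in> car (HH q a b :: ('f, nat \<Rightarrow> 'f) lsa)"
  show "br (HH q a b) (x + y) z = br (HH q a b) x z + br (HH q a b) y z"
    by (auto simp: HH_simps brH_def fun_eq_iff algebra_simps)
  show "br (HH q a b) z (x + y) = br (HH q a b) z x + br (HH q a b) z y"
    by (auto simp: HH_simps brH_def fun_eq_iff algebra_simps)
next
  fix c :: 'f and x y :: "nat \<Rightarrow> 'f"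
  show "br (HH q a b) (sm (HH q a b) c x) y = sm (HH q a b) c (br (HH q a b) x y)"
    by (auto simp: HH_simps brH_def fun_eq_iff algebra_simps fsm_def)
  show "br (HH q a b) x (sm (HH q a b) c y) = sm (HH q a b) c (br (HH q a b) x y)"
    by (auto simp: HH_simps brH_def fun_eq_iff algebra_simps fsm_def)
next
  fix i j :: nat and x y :: "nat \<Rightarrow> 'f"
  assume ij: "i < 2" "j < 2" and x: "x \<in> part (HH q a b) i" and y: "y \<in> part (HH q a b) j"
  have xm: "x \<in> {v \<in> supp_in 0 (4 + 2*a + 2*b). \<forall>j. (Odp q a b j \<noteq> (i = 1)) \<longrightarrow> v j = 0}"
    using x by (subst (asm) part_HH[OF ij(1)])
  have ym: "y \<in> {v \<in> supp_in 0 (4 + 2*a + 2*b). \<forall>t. (Odp q a b t \<noteq> (j = 1)) \<longrightarrow> v t = 0}"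
    using y by (subst (asm) part_HH[OF ij(2)])
  have x': "\<And>t. Odp q a b t \<noteq> (i = 1) \<Longrightarrow> x t = 0" "x \<in> supp_in 0 (4 + 2*a + 2*b)" using xm by auto
  have y': "\<And>t. Odp q a b t \<noteq> (j = 1) \<Longrightarrow> y t = 0" "y \<in> supp_in 0 (4 + 2*a + 2*b)" using ym by auto
  have m2: "(i + j) mod 2 < 2" by simp
  show "br (HH q a b) x y \<in> part (HH q a b) ((i + j) mod 2)"
    unfolding part_HH[OF m2]
  proof (intro CollectI conjI allI impI)
    show "br (HH q a b) x y \<in> supp_in 0 (4 + 2*a + 2*b)"
      using sig_props by (auto simp: HH_simps supp_in_iff brH_def) (metis not_le)
  next
    fix t assume t: "Odp q a b t \<noteq> ((i + j) mod 2 = 1)"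
    show "br (HH q a b) x y t = 0"
    proof (cases "inT a b t")
      case False thus ?thesis by (simp add: HH_simps brH_def)
    next
      case True
      have sp: "sig a b t \<noteq> 0" "Odp q a b (sig a b t) = Odp q a b t"
        using sig_props(1)[OF True] sig_props(3)[OF True] by auto
      have P1: "x 0 * y (sig a b t) = 0"
      proof (cases "i = 1")
        case True thus ?thesis using x'(1)[of 0] not_Odp0 by simp
      next
        case False
        hence "Odp q a b (sig a b t) \<noteq> (j = 1)" using t sp ij by (auto simp: less_2_cases_iff)
        thus ?thesis using y'(1) by simp
      qed
      have P2: "y 0 * x (sig a b t) = 0"
      proof (cases "j = 1")
        case True thus ?thesis using y'(1)[of 0] not_Odp0 by simp
      next
        case False
        hence "Odp q a b (sig a b t) \<noteq> (i = 1)" using t sp ij by (auto simp: less_2_cases_iff)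
        thus ?thesis using x'(1) by simp
      qed
      show ?thesis using True by (simp only: HH_simps brH_def if_True P1 P2 diff_zero)
    qed
  qed
  show "br (HH q a b) x y = - sgnmul i j (br (HH q a b) y x)"
  proof (cases "odd (i * j)")
    case True
    hence "i = 1" "j = 1" using ij by (auto simp: less_2_cases_iff)
    hence "x 0 = 0" "y 0 = 0" using x'(1)[of 0] y'(1)[of 0] not_Odp0 by auto
    thus ?thesis using True by (simp add: sgnmul_def HH_simps brH_def fun_eq_iff)
  next
    case False thus ?thesis by (simp add: sgnmul_def HH_simps brH_def fun_eq_iff)
  qed
next
  fix i j k :: nat and x y z :: "nat \<Rightarrow> 'f"
  assume ijk: "i < 2" "j < 2" "k < 2" and x: "x \<in> part (HH q a b) i" and y: "y \<in> part (HH q a b) j"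
    and z: "z \<in> part (HH q a b) k"
  have xm: "x \<in> {v \<in> supp_in 0 (4 + 2*a + 2*b). \<forall>j. (Odp q a b j \<noteq> (i = 1)) \<longrightarrow> v j = 0}"
    using x by (subst (asm) part_HH[OF ijk(1)])
  have ym: "y \<in> {v \<in> supp_in 0 (4 + 2*a + 2*b). \<forall>j'. (Odp q a b j' \<noteq> (j = 1)) \<longrightarrow> v j' = 0}"
    using y by (subst (asm) part_HH[OF ijk(2)])
  have x0: "i = 1 \<Longrightarrow> x 0 = 0" using xm not_Odp0[of q a b] by auto
  have y0: "j = 1 \<Longrightarrow> y 0 = 0" using ym not_Odp0[of q a b] by auto
  show "br (HH q a b) x (br (HH q a b) y z) =
        br (HH q a b) (br (HH q a b) x y) z + sgnmul i j (br (HH q a b) y (br (HH q a b) x z))"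
  proof (cases "odd (i * j)")
    case True
    hence "i = 1" "j = 1" using ijk by (auto simp: less_2_cases_iff)
    hence "x 0 = 0" "y 0 = 0" using x0 y0 by auto
    thus ?thesis using True not_inT0 by (simp add: sgnmul_def HH_simps brH_def fun_eq_iff)
  next
    case False thus ?thesis using not_inT0 by (simp add: sgnmul_def HH_simps brH_def fun_eq_iff algebra_simps)
  qed
qed

definition piH :: "nat \<Rightarrow> nat \<Rightarrow> (nat \<Rightarrow> 'f::field) \<Rightarrow> (nat \<Rightarrow> 'f) \<times> (nat \<Rightarrow> 'f)" where
  "piH a b p = ((\<lambda>j. if j < 3 then p j else 0), (\<lambda>i. if i < a + b then p (4 + i) else 0))"

lemma sig_range: "inT a b t \<Longrightarrow> sig a b t = 1 \<or> sig a b t = 2 \<or> (4 \<le> sig a b t \<and> sig a b t < 4 + a + b)"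
  unfolding inT_def sig_def by auto

lemma lt3: "(j::nat) < 3 \<Longrightarrow> j = 0 \<or> j = 1 \<or> j = 2" by auto

lemma cq_HH:
  assumes q: "q = 0 \<or> q = 1"
  shows "central_quot (HH q a b) (dsum (HQ q) (Aab a b) :: ('f::field, _) lsa) (piH a b)"
  unfolding central_quot_def
proof (intro conjI)
  let ?M = "dsum (HQ q) (Aab a b) :: ('f::field, _) lsa"
  let ?N = "4 + 2*a + 2*b"
  show "is_lsa (HH q a b :: ('f, nat \<Rightarrow> 'f) lsa)" by (rule is_lsa_HH)
  have carM: "car ?M = supp_in 0 3 \<times> supp_in 0 (a + b)" by (simp add: dsum_simps HQ_simps Aab_simps)
  have evM: "ev ?M = supp_in 0 (if q = 0 then 3 else 1) \<times> supp_in 0 a" by (simp add: dsum_simps HQ_simps Aab_simps)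
  have odM: "od ?M = supp_in (if q = 0 then 3 else 1) 3 \<times> supp_in a (a + b)" by (simp add: dsum_simps HQ_simps Aab_simps)
  have smM: "sm ?M c p = (fsm c (fst p), fsm c (snd p))" for c p by (simp add: dsum_simps HQ_simps Aab_simps)
  have brM: "br ?M p p' = (HB (fst p) (fst p'), 0)" for p p' by (simp add: dsum_simps HQ_simps Aab_simps)
  show "lsa_hom (HH q a b) ?M (piH a b)"
    unfolding lsa_hom_def image_subset_iff
  proof (intro conjI ballI allI)
    fix x :: "nat \<Rightarrow> 'f"
    show "piH a b x \<in> car ?M" unfolding carM piH_def by (auto simp: supp_in_iff)
  next
    fix x y :: "nat \<Rightarrow> 'f"
    show "piH a b (x + y) = piH a b x + piH a b y" unfolding piH_def by (auto simp: fun_eq_iff)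
  next
    fix c and x :: "nat \<Rightarrow> 'f"
    show "piH a b (sm (HH q a b) c x) = sm ?M c (piH a b x)" unfolding smM piH_def
      by (auto simp: fun_eq_iff HH_simps fsm_def)
  next
    fix x :: "nat \<Rightarrow> 'f" assume x: "x \<in> ev (HH q a b)"
    show "piH a b x \<in> ev ?M" using x q unfolding evM piH_def
      by (auto simp: HH_simps supp_in_iff Odp_def dest!: lt3)
  next
    fix x :: "nat \<Rightarrow> 'f" assume x: "x \<in> od (HH q a b)"
    show "piH a b x \<in> od ?M" using x q unfolding odM piH_def
      by (auto simp: HH_simps supp_in_iff Odp_def dest!: lt3)
  next
    fix x y :: "nat \<Rightarrow> 'f"
    show "piH a b (br (HH q a b) x y) = br ?M (piH a b x) (piH a b y)" unfolding brM piH_def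
      by (auto simp: fun_eq_iff HH_simps brH_def HB_def inT_def sig_def)
  qed
  show "piH a b ` car (HH q a b) = car ?M"
  proof
    show "piH a b ` car (HH q a b) \<subseteq> car ?M" unfolding carM piH_def by (auto simp: supp_in_iff)
  next
    show "car ?M \<subseteq> piH a b ` car (HH q a b)"
    proof
      fix p assume p: "p \<in> car ?M"
      define x where "x j = (if j < 3 then fst p j else if 4 \<le> j \<and> j < 4 + a + b then snd p (j - 4) else 0)" for j
      have "x \<in> car (HH q a b)" unfolding x_def by (auto simp: HH_simps supp_in_iff)
      moreover have "piH a b x = p" using p unfolding carM piH_def x_def
        by (auto simp: fun_eq_iff supp_in_iff prod_eq_iff)
      ultimately show "p \<in> piH a b ` car (HH q a b)" by force
    qed
  qed
  show "{x \<in> car (HH q a b). piH a b x = 0} = center (HH q a b)"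
  proof (intro set_eqI iffI)
    fix x assume x: "x \<in> {x \<in> car (HH q a b). piH a b x = 0}"
    have xc: "x \<in> car (HH q a b)" using x by blast
    have z: "x j = 0" if "j < 3" for j
    proof -
      have "fst (piH a b x) j = 0" using x by (simp add: zero_prod_def)
      thus ?thesis using that by (simp add: piH_def)
    qed
    have z2: "x (4 + i) = 0" if "i < a + b" for i
    proof -
      have "snd (piH a b x) i = 0" using x by (simp add: zero_prod_def)
      thus ?thesis using that by (simp add: piH_def)
    qed
    have zs: "x (sig a b t) = 0" if "inT a b t" for t
      using sig_range[OF that] z z2[of "sig a b t - 4"] by auto
    show "x \<in> center (HH q a b)" unfolding center_def using xc z[of 0] zs
      by (auto simp: HH_simps brH_def fun_eq_iff)
  next
    fix x assume x: "x \<in> center (HH q a b)"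
    have xc: "x \<in> car (HH q a b)" using x unfolding center_def by blast
    have br0: "brH a b x r = 0" if "r \<in> supp_in 0 ?N" for r
      using x that unfolding center_def by (auto simp: HH_simps)
    have e1: "(\<lambda>j. if j = 1 then 1 else 0 :: 'f) \<in> supp_in 0 ?N" by (auto simp: supp_in_iff)
    have e0: "(\<lambda>j. if j = 0 then 1 else 0 :: 'f) \<in> supp_in 0 ?N" by (auto simp: supp_in_iff)
    have "brH a b x (\<lambda>j. if j = 1 then 1 else 0) = 0" by (rule br0) (auto simp: supp_in_iff)
    hence "brH a b x (\<lambda>j. if j = 1 then 1 else 0) 2 = 0" by simp
    hence x0: "x 0 = 0" by (simp add: brH_def inT_def sig_def)
    have zs: "x (sig a b t) = 0" if t: "inT a b t" for t
    proof -
      have "brH a b x (\<lambda>j. if j = 0 then 1 else 0) = 0" by (rule br0) (auto simp: supp_in_iff)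
      hence "brH a b x (\<lambda>j. if j = 0 then 1 else 0) t = 0" by simp
      thus ?thesis using t sig_props(1)[OF t] by (simp add: brH_def)
    qed
    have "x 1 = 0" using zs[of 2] by (simp add: inT_def sig_def)
    moreover have "x 2 = 0" using zs[of 3] by (simp add: inT_def sig_def)
    moreover have "x (4 + i) = 0" if "i < a + b" for i
      using zs[of "4 + a + b + i"] that by (simp add: inT_def sig_def)
    ultimately have "piH a b x = 0" using x0 unfolding piH_def
      by (auto simp: fun_eq_iff zero_prod_def less_Suc_eq numeral_3_eq_3 numeral_2_eq_2)
    thus "x \<in> {x \<in> car (HH q a b). piH a b x = 0}" using xc by blast
  qed
qed

lemma cq_transfer:
  assumes L: "is_lsa L" and iso: "lsa_iso L M \<phi>" and gM: "gs M" and cq: "central_quot H M \<pi>"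
  shows "central_quot H L (inv_into (car L) \<phi> \<circ> \<pi>)"
proof -
  interpret L: lsa_ctx L using L by (simp add: lsa_ctx_def)
  have hom: "lsa_hom L M \<phi>" and bij: "bij_betw \<phi> (car L) (car M)" using iso unfolding lsa_iso_def by blast+
  have iso2: "lsa_iso M L (inv_into (car L) \<phi>)" using iso_inverse[OF hom bij L.gs gM] .
  have hom2: "lsa_hom M L (inv_into (car L) \<phi>)" and bij2: "bij_betw (inv_into (car L) \<phi>) (car M) (car L)"
    using iso2 unfolding lsa_iso_def by blast+
  have H: "is_lsa H" "lsa_hom H M \<pi>" "\<pi> ` car H = car M" "{x \<in> car H. \<pi> x = 0} = center H"
    using cq unfolding central_quot_def by blast+
  have z: "inv_into (car L) \<phi> 0 = 0" using hom_zero[OF hom2 gM] .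
  have inj: "inj_on (inv_into (car L) \<phi>) (car M)" using bij2 bij_betw_def by blast
  have ker: "{x \<in> car H. (inv_into (car L) \<phi> \<circ> \<pi>) x = 0} = {x \<in> car H. \<pi> x = 0}"
  proof (intro set_eqI iffI)
    fix x assume x: "x \<in> {x \<in> car H. (inv_into (car L) \<phi> \<circ> \<pi>) x = 0}"
    have "\<pi> x \<in> car M" using x H(3) by blast
    moreover have "inv_into (car L) \<phi> (\<pi> x) = inv_into (car L) \<phi> 0" using x z by simp
    ultimately have "\<pi> x = 0" using inj gs_zero_car[OF gM] inj_onD by metis
    thus "x \<in> {x \<in> car H. \<pi> x = 0}" using x by blast
  next
    fix x assume "x \<in> {x \<in> car H. \<pi> x = 0}" thus "x \<in> {x \<in> car H. (inv_into (car L) \<phi> \<circ> \<pi>) x = 0}" using z by simp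
  qed
  have "(inv_into (car L) \<phi> \<circ> \<pi>) ` car H = car L"
  proof -
    have "(inv_into (car L) \<phi> \<circ> \<pi>) ` car H = inv_into (car L) \<phi> ` (\<pi> ` car H)" by (rule image_comp[symmetric])
    thus ?thesis using H(3) bij2 unfolding bij_betw_def by simp
  qed
  thus ?thesis unfolding central_quot_def using H hom_comp[OF H(2) hom2] ker by simp
qed

theorem mainTheorem1:
  fixes L :: "('f::field, 'v::ab_group_add) lsa" and k l :: nat
  assumes char2: "(2::'f) \<noteq> 0" and char3: "(3::'f) \<noteq> 0"
    and lsa: "is_lsa L" and fin: "fin_dim L" and nil: "nilpotent L"
    and dimL: "dim_ev L (car L) = k" "dim_od L (car L) = l"
    and dimL': "dim_ev L (derived L) + dim_od L (derived L) = 1"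
  shows "(capable_wrt TYPE('h::ab_group_add) L \<longrightarrow>
            (isomorphic L (dsum (Heis 1 0 :: ('f, nat \<Rightarrow> 'f) lsa) (Aab (k - 3) l)) \<or>
             isomorphic L (dsum (Hodd 1 :: ('f, nat \<Rightarrow> 'f) lsa) (Aab (k - 1) (l - 2)))))
       \<and> ((isomorphic L (dsum (Heis 1 0 :: ('f, nat \<Rightarrow> 'f) lsa) (Aab (k - 3) l)) \<or>
             isomorphic L (dsum (Hodd 1 :: ('f, nat \<Rightarrow> 'f) lsa) (Aab (k - 1) (l - 2))))
            \<longrightarrow> capable_wrt TYPE(nat \<Rightarrow> 'f) L)"
proof -
  interpret lsa_ctx L using lsa by (simp add: lsa_ctx_def)
  have evc: "car L \<inter> ev L = ev L" using ev_car by blast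
  have odc: "car L \<inter> od L = od L" using od_car by blast
  have kd: "vector_space.dim (sm L) (ev L) = k" using dimL(1) evc unfolding dim_ev_def by simp
  have ld: "vector_space.dim (sm L) (od L) = l" using dimL(2) odc unfolding dim_od_def by simp
  have H0: "HQ 0 = (Heis 1 0 :: ('f, nat \<Rightarrow> 'f) lsa)" "HQ 1 = (Hodd 1 :: ('f, nat \<Rightarrow> 'f) lsa)"
    by (simp_all add: HQ_def)
  show ?thesis
  proof (intro conjI impI)
    assume "capable_wrt TYPE('h::ab_group_add) L"
    then obtain H :: "('f, 'h) lsa" and f where cq: "central_quot H L f" unfolding capable_wrt_def by blast
    interpret F: fwd L H f
      by unfold_locales (use fin cq nil char2 char3 in auto)
    show "isomorphic L (dsum (Heis 1 0 :: ('f, nat \<Rightarrow> 'f) lsa) (Aab (k - 3) l)) \<or>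
             isomorphic L (dsum (Hodd 1 :: ('f, nat \<Rightarrow> 'f) lsa) (Aab (k - 1) (l - 2)))"
      using F.forward[OF dimL'] kd ld H0 by simp
  next
    assume "isomorphic L (dsum (Heis 1 0 :: ('f, nat \<Rightarrow> 'f) lsa) (Aab (k - 3) l)) \<or>
             isomorphic L (dsum (Hodd 1 :: ('f, nat \<Rightarrow> 'f) lsa) (Aab (k - 1) (l - 2)))"
    then obtain q a b where q: "q = 0 \<or> q = 1" and iso: "isomorphic L (dsum (HQ q :: ('f, nat \<Rightarrow> 'f) lsa) (Aab a b))"
      using H0 by metis
    then obtain \<phi> where \<phi>: "lsa_iso L (dsum (HQ q :: ('f, nat \<Rightarrow> 'f) lsa) (Aab a b)) \<phi>"
      unfolding isomorphic_def by blast
    have "central_quot (HH q a b) L (inv_into (car L) \<phi> \<circ> piH a b)"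
      using cq_transfer[OF lsa \<phi> gs_M cq_HH[OF q]] .
    thus "capable_wrt TYPE(nat \<Rightarrow> 'f) L" unfolding capable_wrt_def by blast
  qed
qed

end
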